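(* Let $n>3$ and let $L$ and ${}^*L=e^{\sigma(x)}L+\beta$ be as in the context. Define $\zeta_{hijk}=\frac1L\Big[S_{hijk}-\frac{S}{(n-1)(n-2)}(h_{ik}h_{jh}-h_{ij}h_{hk})\Big]$ and ${}^*\zeta_{hijk}$ by the same formula built from ${}^*L$. Then ${}^*\zeta_{hijk}=e^{\sigma(x)}\zeta_{hijk}$ holds identically if and only if $H_{ij}=\frac{1}{n-1}A_\beta\,h_{ij}$ holds identically.
   Context: $M$ is a smooth manifold of dimension $n$ with local coordinates $(x^i)$ and induced fiber coordinates $(y^i)$ on $TM$. $L(x,y)$ is a Finsler metric: positive and smooth for $y\neq0$, positively homogeneous of degree 1 in $y$, with positive definite fundamental tensor $g_{ij}=\frac12\frac{\partial^2L^2}{\partial y^i\partial y^j}$ and inverse $g^{ij}$. $\sigma(x)$ is a smooth function on $M$ and $\beta(x,y)=b_i(x)y^i$ is a 1-form; the conformal $\beta$-change is ${}^*L=e^{\sigma(x)}L+\beta$, assumed to be again a Finsler metric. Notation: $l_i=\partial L/\partial y^i$, $l^i=g^{ij}l_j$, $h_{ij}=g_{ij}-l_il_j$, $c_{ijk}=\frac12\partial g_{ij}/\partial y^k$, $c_i{}^r{}_j=g^{rk}c_{ijk}$, $c_i=g^{jk}c_{ijk}$, $b^i=g^{ij}b_j$, $m_i=b_i-\frac{\beta}{L}l_i$, $m^i=g^{ij}m_j$, $m^2=m_im^i$, $c_\beta=c_ib^i$, $A_\beta=c_\beta+\frac{n+1}{4\,{}^*L}m^2$, $H_{ij}=c_i{}^r{}_jm_r+\frac{1}{2\,{}^*L}m_im_j+\frac{1}{4\,{}^*L}h_{ij}m^2$.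 $S_{hijk}=c_{ijr}c_h{}^r{}_k-c_{ikr}c_h{}^r{}_j$, $S_{ik}=g^{hj}S_{hijk}$, $S=g^{ik}S_{ik}$. Quantities built from ${}^*L$ by the same formulas (using ${}^*g_{ij}$ and its inverse ${}^*g^{ij}$) are denoted with a left asterisk. *)

theory Defs
  imports "HOL-Analysis.Analysis"
begin

fun Ck_on :: "nat \<Rightarrow> 'a::euclidean_space set \<Rightarrow> ('a \<Rightarrow> real) \<Rightarrow> bool" where
  "Ck_on 0 S f = continuous_on S f"
| "Ck_on (Suc k) S f =
     (f differentiable_on S \<and> (\<forall>v. Ck_on k S (\<lambda>x. frechet_derivative f (at x) v)))"

definition smooth_on :: "'a::euclidean_space set \<Rightarrow> ('a \<Rightarrow> real) \<Rightarrow> bool" where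
  "smooth_on S f = (\<forall>k. Ck_on k S f)"

definition dy :: "(real^'n \<Rightarrow> real) \<Rightarrow> 'n \<Rightarrow> real^'n \<Rightarrow> real" where
  "dy F i y = deriv (\<lambda>t. F (y + t *\<^sub>R axis i 1)) 0"

definition lcov :: "(real^'n \<Rightarrow> real) \<Rightarrow> 'n \<Rightarrow> real^'n \<Rightarrow> real" where
  "lcov F i y = dy F i y"

definition gf :: "(real^'n \<Rightarrow> real) \<Rightarrow> 'n \<Rightarrow> 'n \<Rightarrow> real^'n \<Rightarrow> real" where
  "gf F i j y = (1/2) * dy (\<lambda>z. dy (\<lambda>w. (F w)\<^sup>2) j z) i y"

definition gmat :: "(real^'n \<Rightarrow> real) \<Rightarrow> real^'n \<Rightarrow> real^'n^'n" where
  "gmat F y = (\<chi> i j. gf F i j y)"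

definition ginv :: "(real^'n \<Rightarrow> real) \<Rightarrow> 'n \<Rightarrow> 'n \<Rightarrow> real^'n \<Rightarrow> real" where
  "ginv F i j y = matrix_inv (gmat F y) $ i $ j"

definition hf :: "(real^'n \<Rightarrow> real) \<Rightarrow> 'n \<Rightarrow> 'n \<Rightarrow> real^'n \<Rightarrow> real" where
  "hf F i j y = gf F i j y - lcov F i y * lcov F j y"

definition cf :: "(real^'n \<Rightarrow> real) \<Rightarrow> 'n \<Rightarrow> 'n \<Rightarrow> 'n \<Rightarrow> real^'n \<Rightarrow> real" where
  "cf F i j k y = (1/2) * dy (\<lambda>z. gf F i j z) k y"

definition cmix :: "(real^'n \<Rightarrow> real) \<Rightarrow> 'n \<Rightarrow> 'n \<Rightarrow> 'n \<Rightarrow> real^'n \<Rightarrow> real" where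
  "cmix F i r j y = (\<Sum>k\<in>UNIV. ginv F r k y * cf F i j k y)"

definition cvec :: "(real^'n \<Rightarrow> real) \<Rightarrow> 'n \<Rightarrow> real^'n \<Rightarrow> real" where
  "cvec F i y = (\<Sum>j\<in>UNIV. \<Sum>k\<in>UNIV. ginv F j k y * cf F i j k y)"

definition Sf :: "(real^'n \<Rightarrow> real) \<Rightarrow> 'n \<Rightarrow> 'n \<Rightarrow> 'n \<Rightarrow> 'n \<Rightarrow> real^'n \<Rightarrow> real" where
  "Sf F h i j k y = (\<Sum>r\<in>UNIV. cf F i j r y * cmix F h r k y - cf F i k r y * cmix F h r j y)"

definition Sric :: "(real^'n \<Rightarrow> real) \<Rightarrow> 'n \<Rightarrow> 'n \<Rightarrow> real^'n \<Rightarrow> real" where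
  "Sric F i k y = (\<Sum>h\<in>UNIV. \<Sum>j\<in>UNIV. ginv F h j y * Sf F h i j k y)"

definition Sscal :: "(real^'n \<Rightarrow> real) \<Rightarrow> real^'n \<Rightarrow> real" where
  "Sscal F y = (\<Sum>i\<in>UNIV. \<Sum>k\<in>UNIV. ginv F i k y * Sric F i k y)"

definition zeta :: "(real^'n \<Rightarrow> real) \<Rightarrow> 'n \<Rightarrow> 'n \<Rightarrow> 'n \<Rightarrow> 'n \<Rightarrow> real^'n \<Rightarrow> real" where
  "zeta F h i j k y =
     (1 / F y) * (Sf F h i j k y
        - Sscal F y / ((real CARD('n) - 1) * (real CARD('n) - 2))
          * (hf F i k y * hf F j h y - hf F i j y * hf F h k y))"

definition finsler :: "(real^'n) set \<Rightarrow> (real^'n \<Rightarrow> real^'n \<Rightarrow> real) \<Rightarrow> bool" where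
  "finsler U L \<longleftrightarrow>
     smooth_on (U \<times> (UNIV - {0})) (\<lambda>(x, y). L x y) \<and>
     (\<forall>x\<in>U. \<forall>y. y \<noteq> 0 \<longrightarrow> L x y > 0) \<and>
     (\<forall>x\<in>U. \<forall>y. \<forall>t::real. t > 0 \<longrightarrow> L x (t *\<^sub>R y) = t * L x y) \<and>
     (\<forall>x\<in>U. \<forall>y. y \<noteq> 0 \<longrightarrow>
        (\<forall>v. v \<noteq> 0 \<longrightarrow> v \<bullet> (gmat (L x) y *v v) > 0))"

definition Lstar :: "(real^'n \<Rightarrow> real) \<Rightarrow> (real^'n \<Rightarrow> real^'n) \<Rightarrow> (real^'n \<Rightarrow> real^'n \<Rightarrow> real)
                     \<Rightarrow> real^'n \<Rightarrow> real^'n \<Rightarrow> real" where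
  "Lstar \<sigma> b L x y = exp (\<sigma> x) * L x y + b x \<bullet> y"

text \<open>m_i = b_i - (beta/L) l_i  (for the metric F = L(x,.) and covector bx = b(x))\<close>
definition mcov :: "(real^'n \<Rightarrow> real) \<Rightarrow> real^'n \<Rightarrow> 'n \<Rightarrow> real^'n \<Rightarrow> real" where
  "mcov F bx i y = bx $ i - (bx \<bullet> y / F y) * lcov F i y"

definition msq :: "(real^'n \<Rightarrow> real) \<Rightarrow> real^'n \<Rightarrow> real^'n \<Rightarrow> real" where
  "msq F bx y = (\<Sum>i\<in>UNIV. \<Sum>j\<in>UNIV. ginv F i j y * mcov F bx i y * mcov F bx j y)"

definition cbeta :: "(real^'n \<Rightarrow> real) \<Rightarrow> real^'n \<Rightarrow> real^'n \<Rightarrow> real" where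
  "cbeta F bx y = (\<Sum>i\<in>UNIV. cvec F i y * (\<Sum>j\<in>UNIV. ginv F i j y * bx $ j))"

definition Abeta :: "(real^'n \<Rightarrow> real) \<Rightarrow> (real^'n \<Rightarrow> real) \<Rightarrow> real^'n \<Rightarrow> real^'n \<Rightarrow> real" where
  "Abeta F Ls bx y = cbeta F bx y + (real CARD('n) + 1) / (4 * Ls y) * msq F bx y"

definition Hf :: "(real^'n \<Rightarrow> real) \<Rightarrow> (real^'n \<Rightarrow> real) \<Rightarrow> real^'n \<Rightarrow> 'n \<Rightarrow> 'n \<Rightarrow> real^'n \<Rightarrow> real" where
  "Hf F Ls bx i j y =
     (\<Sum>r\<in>UNIV. cmix F i r j y * mcov F bx r y)
     + 1 / (2 * Ls y) * mcov F bx i y * mcov F bx j y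
     + 1 / (4 * Ls y) * hf F i j y * msq F bx y"

end

theory Submission
  imports Defs
begin


definition dotv :: "('n::finite \<Rightarrow> real) \<Rightarrow> ('n \<Rightarrow> real) \<Rightarrow> real" where
  "dotv u v = (\<Sum>i\<in>UNIV. u i * v i)"

definition mv :: "('n::finite \<Rightarrow> 'n \<Rightarrow> real) \<Rightarrow> ('n \<Rightarrow> real) \<Rightarrow> 'n \<Rightarrow> real" where
  "mv M u = (\<lambda>a. \<Sum>b\<in>UNIV. M a b * u b)"

lemma dotv_add1[simp]: "dotv (\<lambda>i. u i + v i) w = dotv u w + dotv v w"
  by (simp add: dotv_def algebra_simps sum.distrib)
lemma dotv_add2[simp]: "dotv w (\<lambda>i. u i + v i) = dotv w u + dotv w v"
  by (simp add: dotv_def algebra_simps sum.distrib)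
lemma dotv_diff1[simp]: "dotv (\<lambda>i. u i - v i) w = dotv u w - dotv v w"
  by (simp add: dotv_def algebra_simps sum_subtractf)
lemma dotv_diff2[simp]: "dotv w (\<lambda>i. u i - v i) = dotv w u - dotv w v"
  by (simp add: dotv_def algebra_simps sum_subtractf)
lemma dotv_scal1[simp]: "dotv (\<lambda>i. a * u i) w = a * dotv u w"
  by (simp add: dotv_def algebra_simps sum_distrib_left)
lemma dotv_scal2[simp]: "dotv w (\<lambda>i. a * u i) = a * dotv w u"
  by (simp add: dotv_def algebra_simps sum_distrib_left)
lemma dotv_scal1'[simp]: "dotv (\<lambda>i. u i * a) w = a * dotv u w"
  by (simp add: dotv_def algebra_simps sum_distrib_left)
lemma dotv_scal2'[simp]: "dotv w (\<lambda>i. u i * a) = a * dotv w u"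
  by (simp add: dotv_def algebra_simps sum_distrib_left)
lemma dotv_div1[simp]: "dotv (\<lambda>i. u i / a) w = dotv u w / a"
  by (simp add: dotv_def algebra_simps sum_divide_distrib)
lemma dotv_div2[simp]: "dotv w (\<lambda>i. u i / a) = dotv w u / a"
  by (simp add: dotv_def algebra_simps sum_divide_distrib)
lemma dotv_comm: "dotv u v = dotv v u"
  by (simp add: dotv_def mult.commute)
lemma dotv_zero1[simp]: "dotv (\<lambda>i. 0) w = 0" and dotv_zero2[simp]: "dotv w (\<lambda>i. 0) = 0"
  by (simp_all add: dotv_def)
lemma dotv_neg1[simp]: "dotv (\<lambda>i. - u i) w = - dotv u w"
  by (simp add: dotv_def sum_negf)
lemma dotv_neg2[simp]: "dotv w (\<lambda>i. - u i) = - dotv w u"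
  by (simp add: dotv_def sum_negf)

lemma dotv_delta1[simp]: "dotv (\<lambda>i. if i = a then 1 else 0) w = w a"
proof -
  have "\<And>i. (if i = a then 1 else 0) * w i = (if i = a then w i else 0)" by simp
  then show ?thesis by (simp add: dotv_def)
qed
lemma dotv_delta1'[simp]: "dotv (\<lambda>i. if a = i then 1 else 0) w = w a"
proof -
  have "\<And>i. (if a = i then 1 else 0) * w i = (if a = i then w i else 0)" by simp
  then show ?thesis by (simp add: dotv_def)
qed
lemma dotv_delta2[simp]: "dotv w (\<lambda>i. if i = a then 1 else 0) = w a"
  using dotv_delta1 dotv_comm by metis
lemma dotv_delta2'[simp]: "dotv w (\<lambda>i. if a = i then 1 else 0) = w a"
  using dotv_delta1' dotv_comm by metis

lemma mv_apply: "mv M u a = dotv (M a) u"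
  by (simp add: mv_def dotv_def)

lemma dotv_mv_swap: "dotv w (mv M u) = dotv (\<lambda>b. dotv w (\<lambda>a. M a b)) u"
proof -
  have "(\<Sum>a\<in>UNIV. w a * (\<Sum>b\<in>UNIV. M a b * u b)) = (\<Sum>a\<in>UNIV. \<Sum>b\<in>UNIV. w a * M a b * u b)"
    by (simp add: sum_distrib_left mult.assoc)
  also have "\<dots> = (\<Sum>b\<in>UNIV. \<Sum>a\<in>UNIV. w a * M a b * u b)" by (rule sum.swap)
  also have "\<dots> = (\<Sum>b\<in>UNIV. (\<Sum>a\<in>UNIV. w a * M a b) * u b)" by (simp add: sum_distrib_right)
  finally show ?thesis by (simp add: dotv_def mv_def)
qed

lemma mv_add[simp]: "mv M (\<lambda>i. u i + v i) = (\<lambda>a. mv M u a + mv M v a)"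
  by (simp add: mv_def algebra_simps sum.distrib)
lemma mv_diff[simp]: "mv M (\<lambda>i. u i - v i) = (\<lambda>a. mv M u a - mv M v a)"
  by (simp add: mv_def algebra_simps sum_subtractf)
lemma mv_scal[simp]: "mv M (\<lambda>i. c * u i) = (\<lambda>a. c * mv M u a)"
  by (simp add: mv_def algebra_simps sum_distrib_left)
lemma mv_div[simp]: "mv M (\<lambda>i. u i / c) = (\<lambda>a. mv M u a / c)"
  by (simp add: mv_def algebra_simps sum_divide_distrib)


lemma dotv_sum1: "dotv (\<lambda>r. \<Sum>a\<in>UNIV. U a r) w = (\<Sum>a\<in>UNIV. dotv (U a) w)"
  unfolding dotv_def by (simp add: sum_distrib_right) (rule sum.swap)
lemma dotv_sum2: "dotv w (\<lambda>r. \<Sum>a\<in>UNIV. U a r) = (\<Sum>a\<in>UNIV. dotv w (U a))"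
  unfolding dotv_def by (simp add: sum_distrib_left) (rule sum.swap)
lemma mv_sum: "mv M (\<lambda>s. \<Sum>a\<in>UNIV. U a s) = (\<lambda>r. \<Sum>a\<in>UNIV. mv M (U a) r)"
  unfolding mv_def by (rule ext) (simp add: sum_distrib_left, rule sum.swap)
lemma mv_zero[simp]: "mv M (\<lambda>s. 0) = (\<lambda>r. 0)"
  by (simp add: mv_def)

locale alg =
  fixes y :: "'n::finite \<Rightarrow> real" and L0 :: real and l :: "'n \<Rightarrow> real"
    and P :: "'n \<Rightarrow> 'n \<Rightarrow> real" and Q :: "'n \<Rightarrow> 'n \<Rightarrow> 'n \<Rightarrow> real"
    and gi :: "'n \<Rightarrow> 'n \<Rightarrow> real" and e :: real and bv :: "'n \<Rightarrow> real"
    and gsi :: "'n \<Rightarrow> 'n \<Rightarrow> real"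
  assumes card_gt: "CARD('n) > 3" and L0pos: "L0 > 0" and epos: "e > 0" and Lspos: "e * L0 + dotv bv y > 0"
    and Psym: "P i j = P j i" and Qsym1: "Q i j k = Q j i k" and Qsym2: "Q i j k = Q i k j"
    and eul1: "dotv l y = L0" and eul2: "dotv (P i) y = 0" and eul3: "dotv (Q i j) y = - P i j"
    and giL: "(\<Sum>k\<in>UNIV. gi i k * (l k * l j + L0 * P k j)) = (if i = j then 1 else 0)"
    and giR: "(\<Sum>k\<in>UNIV. (l i * l k + L0 * P i k) * gi k j) = (if i = j then 1 else 0)"
    and gsiL: "(\<Sum>k\<in>UNIV. gsi i k * ((e * l k + bv k) * (e * l j + bv j) + (e * L0 + dotv bv y) * (e * P k j)))
               = (if i = j then 1 else 0)"
begin

definition "g i j = l i * l j + L0 * P i j"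
definition "beta = dotv bv y"
definition "Ls = e * L0 + beta"
definition "ls i = e * l i + bv i"
definition "gs i j = ls i * ls j + Ls * (e * P i j)"
definition "m i = bv i - (beta / L0) * l i"
definition "hh i j = L0 * P i j"
definition "p = e * Ls / L0"
definition "c i j k = (P i k * l j + l i * P j k + l k * P i j + L0 * Q i j k) / 2"
definition "cs i j k = (e * P i k * ls j + ls i * (e * P j k) + ls k * (e * P i j) + Ls * (e * Q i j k)) / 2"
definition "B u v = dotv u (mv gi v)"
definition "Bs u v = dotv u (mv gsi v)"
definition "m2 = B m m"
definition "C i j = B (c i j) m"

lemma Ls_pos: "Ls > 0" using Lspos by (simp add: Ls_def beta_def)
lemma p_pos: "p > 0" using Ls_pos L0pos epos by (simp add: p_def)
lemma L0ne[simp]: "L0 \<noteq> 0" and Lsne[simp]: "Ls \<noteq> 0" and pne[simp]: "p \<noteq> 0" and ene[simp]: "e \<noteq> 0"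
  using L0pos Ls_pos p_pos epos by auto

lemma gi_left: "dotv (gi i) (\<lambda>k. g k j) = (if i = j then 1 else 0)"
  unfolding dotv_def g_def by (rule giL)
lemma gi_right: "dotv (g i) (\<lambda>k. gi k j) = (if i = j then 1 else 0)"
  unfolding dotv_def g_def by (rule giR)
lemma gsi_left: "dotv (gsi i) (\<lambda>k. gs k j) = (if i = j then 1 else 0)"
  using gsiL[of i j] by (simp only: dotv_def gs_def ls_def Ls_def beta_def)

lemma g_sym: "g i j = g j i" by (simp add: g_def Psym mult.commute)

lemma gi_sym: "gi a b = gi b a"
proof -
  have "gi b a = dotv (\<lambda>m. dotv (gi a) (\<lambda>k. g k m)) (gi b)"
    by (simp add: gi_left)
  also have "\<dots> = dotv (gi a) (mv g (gi b))"
    by (simp add: dotv_mv_swap)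
  also have "mv g (gi b) = (\<lambda>k. dotv (g k) (gi b))" by (simp add: mv_apply[abs_def])
  also have "(\<lambda>k. dotv (g k) (gi b)) = (\<lambda>k. if k = b then 1 else 0)"
  proof
    fix k
    have "g k = (\<lambda>j. g j k)" by (rule ext) (simp add: g_sym)
    then have "dotv (g k) (gi b) = dotv (gi b) (\<lambda>j. g j k)"
      by (metis dotv_comm)
    then show "dotv (g k) (gi b) = (if k = b then 1 else 0)" by (simp add: gi_left)
  qed
  finally show ?thesis by simp
qed

lemma g_y: "dotv (g i) y = L0 * l i"
  by (simp add: g_def[abs_def] eul1 eul2 mult.commute)

lemma gi_l: "dotv (gi i) l = y i / L0"
proof -
  have "l = (\<lambda>k. dotv (g k) y / L0)" by (simp add: g_y)
  then have "dotv (gi i) l = dotv (gi i) (\<lambda>k. dotv (g k) y / L0)" by simp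
  also have "\<dots> = dotv (gi i) (mv g y) / L0" by (simp add: mv_apply[abs_def])
  also have "dotv (gi i) (mv g y) = dotv (\<lambda>b. dotv (gi i) (\<lambda>a. g a b)) y" by (rule dotv_mv_swap)
  also have "\<dots> = y i" by (simp add: gi_left)
  finally show ?thesis .
qed

lemma gi_l': "dotv l (\<lambda>k. gi k i) = y i / L0"
proof -
  have "(\<lambda>k. gi k i) = gi i" by (rule ext) (simp add: gi_sym)
  then show ?thesis using gi_l by (metis dotv_comm)
qed

lemma hh_sym: "hh i j = hh j i" by (simp add: hh_def Psym)
lemma hh_g: "hh i j = g i j - l i * l j" by (simp add: hh_def g_def)
lemma hh_y: "dotv (hh i) y = 0" by (simp add: hh_def[abs_def] eul2)
lemma hh_y': "dotv y (hh i) = 0" using hh_y dotv_comm by metis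
lemma m_y: "dotv m y = 0" by (simp add: m_def[abs_def] beta_def eul1)

lemma B_sym: "B u v = B v u"
proof -
  have "B u v = dotv (\<lambda>b. dotv u (\<lambda>a. gi a b)) v" unfolding B_def by (rule dotv_mv_swap)
  also have "(\<lambda>b. dotv u (\<lambda>a. gi a b)) = (\<lambda>b. dotv (gi b) u)"
  proof
    fix b
    have "(\<lambda>a. gi a b) = gi b" by (rule ext) (simp add: gi_sym)
    then show "dotv u (\<lambda>a. gi a b) = dotv (gi b) u" by (metis dotv_comm)
  qed
  also have "dotv \<dots> v = dotv v (mv gi u)" by (simp add: dotv_comm mv_apply[abs_def])
  finally show ?thesis by (simp add: B_def)
qed

lemma hgi: assumes "dotv u y = 0" shows "dotv (hh a) (mv gi u) = u a"
proof -
  have "dotv (hh a) (mv gi u) = dotv (g a) (mv gi u) - l a * dotv l (mv gi u)"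
    by (simp add: hh_g[abs_def])
  also have "dotv (g a) (mv gi u) = u a"
    by (simp add: dotv_mv_swap gi_right)
  also have "dotv l (mv gi u) = dotv (\<lambda>b. y b / L0) u"
    by (simp add: dotv_mv_swap gi_l')
  also have "\<dots> = 0" using assms by (simp add: dotv_comm)
  finally show ?thesis by simp
qed

lemma B_hh2: assumes "dotv u y = 0" shows "B u (hh b) = u b"
proof -
  have "B u (hh b) = B (hh b) u" by (rule B_sym)
  also have "\<dots> = u b" unfolding B_def by (rule hgi[OF assms])
  finally show ?thesis .
qed
lemma B_hh1: assumes "dotv u y = 0" shows "B (hh b) u = u b"
  using B_hh2[OF assms] B_sym by metis


lemma c_sym1: "c i j k = c j i k" by (simp add: c_def Psym Qsym1 algebra_simps)
lemma c_sym2: "c i j k = c i k j" by (simp add: c_def Psym Qsym2[of i j k] algebra_simps)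
lemma c_y: "dotv (c i j) y = 0"
  by (simp add: c_def[abs_def] eul1 eul2 eul3 algebra_simps)
lemma c_slot1: "(\<lambda>k. c k i j) = c i j" by (rule ext) (metis c_sym1 c_sym2)
lemma c_slot2: "(\<lambda>k. c i k j) = c i j" by (rule ext) (metis c_sym2)
lemma c_y1: "dotv (\<lambda>k. c k i j) y = 0" by (simp add: c_slot1 c_y)
lemma c_y2: "dotv (\<lambda>k. c i k j) y = 0" by (simp add: c_slot2 c_y)

lemma cs_formula: "cs i j k = p * c i j k + p / (2 * Ls) * (hh i k * m j + m i * hh j k + m k * hh i j)"
proof -
  have ls_alt: "ls a = (Ls / L0) * l a + m a" for a
    by (simp add: ls_def m_def Ls_def field_simps)
  show ?thesis unfolding cs_def c_def hh_def p_def ls_alt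
    by (simp add: field_simps)
qed

lemma cs_sym1: "cs i j k = cs j i k" by (simp add: cs_formula c_sym1[of i j k] hh_sym algebra_simps)
lemma cs_sym2: "cs i j k = cs i k j" by (simp add: cs_formula c_sym2[of i j k] hh_sym algebra_simps)
lemma cs_y: "dotv (cs i j) y = 0"
  by (simp add: cs_formula[abs_def] c_y hh_y m_y)
lemma cs_slot1: "(\<lambda>k. cs k i j) = cs i j" by (rule ext) (metis cs_sym1 cs_sym2)
lemma cs_slot2: "(\<lambda>k. cs i k j) = cs i j" by (rule ext) (metis cs_sym2)
lemma cs_y1: "dotv (\<lambda>k. cs k i j) y = 0" by (simp add: cs_slot1 cs_y)
lemma cs_y2: "dotv (\<lambda>k. cs i k j) y = 0" by (simp add: cs_slot2 cs_y)

lemma l_gi_u: assumes "dotv u y = 0" shows "dotv l (mv gi u) = 0"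
proof -
  have "dotv l (mv gi u) = dotv (\<lambda>b. y b / L0) u"
    by (simp add: dotv_mv_swap gi_l')
  also have "\<dots> = 0" using assms by (simp add: dotv_comm)
  finally show ?thesis .
qed

lemma gs_alt: "gs a = (\<lambda>k. ls a * ((Ls / L0) * l k + m k) + p * hh a k)"
  by (rule ext) (simp add: gs_def ls_def m_def hh_def p_def Ls_def field_simps)

lemma gsi_act: assumes u: "dotv u y = 0" shows "mv gsi u a = (mv gi u a - B m u / Ls * y a) / p"
proof -
  define w where "w = (\<lambda>k. (mv gi u k - B m u / Ls * y k) / p)"
  have gw: "dotv (gs a') w = u a'" for a'
  proof -
    have "dotv (gs a') w = ls a' * ((Ls / L0) * dotv l w + dotv m w) + p * dotv (hh a') w"
      by (simp add: gs_alt)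
    also have "dotv l w = (- B m u / Ls * L0) / p"
      by (simp add: w_def l_gi_u[OF u] eul1 dotv_comm[of l y])
    also have "dotv m w = B m u / p"
      by (simp add: w_def m_y dotv_comm[of m y] B_def)
    also have "dotv (hh a') w = u a' / p"
      by (simp add: w_def hgi[OF u] hh_y)
    finally show ?thesis by (simp add: field_simps)
  qed
  have "mv gsi u a = dotv (gsi a) (\<lambda>k. dotv (gs k) w)" by (simp add: gw mv_apply)
  also have "\<dots> = dotv (gsi a) (mv gs w)" by (simp add: mv_apply[abs_def])
  also have "\<dots> = w a" by (simp add: dotv_mv_swap gsi_left)
  finally show ?thesis by (simp add: w_def)
qed

lemma Bs_B: assumes u: "dotv u y = 0" and v: "dotv v y = 0" shows "Bs u v = B u v / p"
proof -
  have "mv gsi v = (\<lambda>a. (mv gi v a - B m v / Ls * y a) / p)" by (rule ext) (rule gsi_act[OF v])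
  then have "Bs u v = dotv u (\<lambda>a. (mv gi v a - B m v / Ls * y a) / p)" by (simp add: Bs_def)
  also have "\<dots> = B u v / p" by (simp add: u B_def)
  finally show ?thesis .
qed

lemma trace_s: assumes rows: "\<And>a. dotv (T a) y = 0" and cols: "\<And>b. dotv (\<lambda>a. T a b) y = 0"
  shows "(\<Sum>a\<in>UNIV. \<Sum>b\<in>UNIV. gsi a b * T a b) = (\<Sum>a\<in>UNIV. \<Sum>b\<in>UNIV. gi a b * T a b) / p"
proof -
  have "(\<Sum>a\<in>UNIV. \<Sum>b\<in>UNIV. gsi a b * T a b) = (\<Sum>a\<in>UNIV. mv gsi (T a) a)" by (simp add: mv_def)
  also have "\<dots> = (\<Sum>a\<in>UNIV. (mv gi (T a) a - B m (T a) / Ls * y a) / p)"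
    by (simp add: gsi_act[OF rows])
  also have "\<dots> = ((\<Sum>a\<in>UNIV. mv gi (T a) a) - (\<Sum>a\<in>UNIV. y a * B m (T a)) / Ls) / p"
    by (simp add: sum_divide_distrib[symmetric] sum_subtractf algebra_simps)
  also have "(\<Sum>a\<in>UNIV. y a * B m (T a)) = dotv m (\<lambda>r. \<Sum>a\<in>UNIV. y a * mv gi (T a) r)"
    by (simp add: B_def dotv_sum2 )
  also have "(\<lambda>r. \<Sum>a\<in>UNIV. y a * mv gi (T a) r) = mv gi (\<lambda>s. \<Sum>a\<in>UNIV. y a * T a s)"
    by (simp add: mv_sum)
  also have "(\<lambda>s. \<Sum>a\<in>UNIV. y a * T a s) = (\<lambda>s. 0)"
    using cols by (simp add: dotv_def mult.commute)
  finally show ?thesis by (simp add: mv_def)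
qed

end


definition cmixA :: "('n::finite \<Rightarrow> 'n \<Rightarrow> real) \<Rightarrow> ('n \<Rightarrow> 'n \<Rightarrow> 'n \<Rightarrow> real) \<Rightarrow> 'n \<Rightarrow> 'n \<Rightarrow> 'n \<Rightarrow> real" where
  "cmixA G cc i r j = (\<Sum>k\<in>UNIV. G r k * cc i j k)"
definition SfA :: "('n::finite \<Rightarrow> 'n \<Rightarrow> real) \<Rightarrow> ('n \<Rightarrow> 'n \<Rightarrow> 'n \<Rightarrow> real) \<Rightarrow> 'n \<Rightarrow> 'n \<Rightarrow> 'n \<Rightarrow> 'n \<Rightarrow> real" where
  "SfA G cc h i j k = (\<Sum>r\<in>UNIV. cc i j r * cmixA G cc h r k - cc i k r * cmixA G cc h r j)"
definition SricA :: "('n::finite \<Rightarrow> 'n \<Rightarrow> real) \<Rightarrow> ('n \<Rightarrow> 'n \<Rightarrow> 'n \<Rightarrow> real) \<Rightarrow> 'n \<Rightarrow> 'n \<Rightarrow> real" where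
  "SricA G cc i k = (\<Sum>h\<in>UNIV. \<Sum>j\<in>UNIV. G h j * SfA G cc h i j k)"
definition SscalA :: "('n::finite \<Rightarrow> 'n \<Rightarrow> real) \<Rightarrow> ('n \<Rightarrow> 'n \<Rightarrow> 'n \<Rightarrow> real) \<Rightarrow> real" where
  "SscalA G cc = (\<Sum>i\<in>UNIV. \<Sum>k\<in>UNIV. G i k * SricA G cc i k)"
definition zetaA :: "real \<Rightarrow> ('n::finite \<Rightarrow> 'n \<Rightarrow> real) \<Rightarrow> ('n \<Rightarrow> 'n \<Rightarrow> 'n \<Rightarrow> real) \<Rightarrow> ('n \<Rightarrow> 'n \<Rightarrow> real) \<Rightarrow> 'n \<Rightarrow> 'n \<Rightarrow> 'n \<Rightarrow> 'n \<Rightarrow> real" where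
  "zetaA Lv G cc hv h i j k = (1 / Lv) * (SfA G cc h i j k
        - SscalA G cc / ((real CARD('n) - 1) * (real CARD('n) - 2))
          * (hv i k * hv j h - hv i j * hv h k))"
definition msqA :: "('n::finite \<Rightarrow> 'n \<Rightarrow> real) \<Rightarrow> ('n \<Rightarrow> real) \<Rightarrow> real" where
  "msqA G mm = (\<Sum>i\<in>UNIV. \<Sum>j\<in>UNIV. G i j * mm i * mm j)"
definition HfA :: "('n::finite \<Rightarrow> 'n \<Rightarrow> real) \<Rightarrow> ('n \<Rightarrow> 'n \<Rightarrow> 'n \<Rightarrow> real) \<Rightarrow> ('n \<Rightarrow> 'n \<Rightarrow> real) \<Rightarrow> ('n \<Rightarrow> real) \<Rightarrow> real \<Rightarrow> 'n \<Rightarrow> 'n \<Rightarrow> real" where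
  "HfA G cc hv mm Lsv i j = (\<Sum>r\<in>UNIV. cmixA G cc i r j * mm r)
     + 1 / (2 * Lsv) * mm i * mm j + 1 / (4 * Lsv) * hv i j * msqA G mm"
definition cvecA :: "('n::finite \<Rightarrow> 'n \<Rightarrow> real) \<Rightarrow> ('n \<Rightarrow> 'n \<Rightarrow> 'n \<Rightarrow> real) \<Rightarrow> 'n \<Rightarrow> real" where
  "cvecA G cc i = (\<Sum>j\<in>UNIV. \<Sum>k\<in>UNIV. G j k * cc i j k)"
definition AbetaA :: "('n::finite \<Rightarrow> 'n \<Rightarrow> real) \<Rightarrow> ('n \<Rightarrow> 'n \<Rightarrow> 'n \<Rightarrow> real) \<Rightarrow> ('n \<Rightarrow> real) \<Rightarrow> ('n \<Rightarrow> real) \<Rightarrow> real \<Rightarrow> real" where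
  "AbetaA G cc bv mm Lsv = (\<Sum>i\<in>UNIV. cvecA G cc i * (\<Sum>j\<in>UNIV. G i j * bv j))
     + (real CARD('n) + 1) / (4 * Lsv) * msqA G mm"

lemma SfA_dot: "SfA G cc h i j k = dotv (cc i j) (mv G (cc h k)) - dotv (cc i k) (mv G (cc h j))"
  by (simp add: SfA_def cmixA_def dotv_def mv_def sum_subtractf)

lemma dotv_swap: "dotv w (\<lambda>h. dotv U (V h)) = dotv U (\<lambda>s. dotv w (\<lambda>h. V h s))"
  unfolding dotv_def by (simp add: sum_distrib_left mult.left_commute) (rule sum.swap)
lemma dotv_swap2: "dotv w (\<lambda>i. dotv (U i) V) = dotv (\<lambda>r. dotv w (\<lambda>i. U i r)) V"
  unfolding dotv_def by (simp add: sum_distrib_left sum_distrib_right mult.assoc) (rule sum.swap)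
lemma mv_swap: "(\<lambda>s. dotv w (\<lambda>h. mv G (W h) s)) = mv G (\<lambda>t. dotv w (\<lambda>h. W h t))"
  unfolding dotv_def mv_def by (rule ext) (simp add: sum_distrib_left mult.left_commute, rule sum.swap)

lemma dotv_cong0: "(\<And>s. f s = 0) \<Longrightarrow> dotv u f = 0" by (simp add: dotv_def)
lemma dotv_cong0': "(\<And>s. f s = 0) \<Longrightarrow> dotv f u = 0" by (simp add: dotv_def)
lemma mv_cong0: "(\<And>s. f s = 0) \<Longrightarrow> mv G f = (\<lambda>r. 0)" by (simp add: mv_def)

lemma Sf_slots:
  assumes A1: "\<And>a b. dotv y (\<lambda>h. cc h a b) = 0" and A2: "\<And>a b. dotv y (\<lambda>h. cc a h b) = 0"
  shows "dotv y (\<lambda>h. SfA G cc h i j k) = 0" and "dotv y (\<lambda>i. SfA G cc h i j k) = 0"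
    and "dotv y (\<lambda>j. SfA G cc h i j k) = 0" and "dotv y (\<lambda>k. SfA G cc h i j k) = 0"
proof -
  have z1: "mv G (\<lambda>t. dotv y (\<lambda>h. cc h a t)) = (\<lambda>r. 0)" for a by (rule mv_cong0) (rule A1)
  have z2: "mv G (\<lambda>t. dotv y (\<lambda>h. cc a h t)) = (\<lambda>r. 0)" for a by (rule mv_cong0) (rule A2)
  have z3: "(\<lambda>r. dotv y (\<lambda>i. cc i a r)) = (\<lambda>r. 0)" for a using A1 by simp
  have z4: "(\<lambda>r. dotv y (\<lambda>i. cc a i r)) = (\<lambda>r. 0)" for a using A2 by simp
  show "dotv y (\<lambda>h. SfA G cc h i j k) = 0"
    by (simp add: SfA_dot dotv_swap mv_swap z1)
  show "dotv y (\<lambda>i. SfA G cc h i j k) = 0"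
    by (simp add: SfA_dot dotv_swap2 z3)
  show "dotv y (\<lambda>j. SfA G cc h i j k) = 0"
    by (simp add: SfA_dot dotv_swap2 dotv_swap mv_swap z4 z2)
  show "dotv y (\<lambda>k. SfA G cc h i j k) = 0"
    by (simp add: SfA_dot dotv_swap2 dotv_swap mv_swap z4 z2)
qed

context alg
begin

lemma B_add1[simp]: "B (\<lambda>r. u r + v r) w = B u w + B v w" by (simp add: B_def)
lemma B_add2[simp]: "B w (\<lambda>r. u r + v r) = B w u + B w v" by (simp add: B_def)
lemma B_sc1[simp]: "B (\<lambda>r. a * u r) w = a * B u w" by (simp add: B_def)
lemma B_sc2[simp]: "B w (\<lambda>r. a * u r) = a * B w u" by (simp add: B_def)
lemma B_sc1'[simp]: "B (\<lambda>r. u r * a) w = a * B u w" by (simp add: B_def)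
lemma B_sc2'[simp]: "B w (\<lambda>r. u r * a) = a * B w u"
  by (metis B_sc1' B_sym)

lemma Bv1: "B (c i j) (hh a) = c i j a" by (rule B_hh2[OF c_y])
lemma Bv2: "B (hh a) (c i j) = c i j a" by (rule B_hh1[OF c_y])
lemma Bv3: "B (c i j) m = C i j" by (simp add: C_def)
lemma Bv4: "B m (c i j) = C i j" by (simp add: C_def B_sym)
lemma Bv5: "B (hh a) (hh b) = hh a b" by (rule B_hh2[OF hh_y])
lemma Bv6: "B (hh a) m = m a" by (rule B_hh1[OF m_y])
lemma Bv7: "B m (hh a) = m a" by (rule B_hh2[OF m_y])
lemma Bv8: "B m m = m2" by (simp add: m2_def)
lemmas Bvals = Bv1 Bv2 Bv3 Bv4 Bv5 Bv6 Bv7 Bv8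

definition "H i j = C i j + m i * m j / (2 * Ls) + hh i j * m2 / (4 * Ls)"
definition "wedge W h i j k = hh h k * W i j + hh i j * W h k - hh h j * W i k - hh i k * W h j"

lemma cs_fun: "cs i j = (\<lambda>r. p * c i j r + p / (2 * Ls) * (hh i r * m j + m i * hh j r + m r * hh i j))"
  by (rule ext) (rule cs_formula)

lemma S_star: "SfA gsi cs h i j k = p * (SfA gi c h i j k + wedge H h i j k / (2 * Ls))"
proof -
  have "SfA gsi cs h i j k = Bs (cs i j) (cs h k) - Bs (cs i k) (cs h j)"
    by (simp add: SfA_dot Bs_def)
  also have "\<dots> = (B (cs i j) (cs h k) - B (cs i k) (cs h j)) / p"
    by (simp add: Bs_B cs_y diff_divide_distrib)
  finally have 1: "SfA gsi cs h i j k = (B (cs i j) (cs h k) - B (cs i k) (cs h j)) / p" .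
  have 2: "SfA gi c h i j k = B (c i j) (c h k) - B (c i k) (c h j)"
    by (simp add: SfA_dot B_def)
  have s: "c i k j = c i j k" "c h j i = c i j h" "c i k h = c h k i" "c h j k = c h k j"
    by (metis c_sym1 c_sym2)+
  show ?thesis unfolding 1 2 cs_fun
    apply (simp only: B_add1 B_add2 B_sc1 B_sc2 B_sc1' B_sc2' Bvals)
    by (simp add: s hh_sym[of j h] hh_sym[of k h] hh_sym[of k i] hh_sym[of k j] H_def wedge_def field_simps)
qed

end


lemma triple_swap: "(\<Sum>i\<in>UNIV. (\<Sum>j\<in>UNIV. \<Sum>k\<in>UNIV. (G j k::real) * X i j k) * Z i)
   = (\<Sum>j\<in>UNIV. \<Sum>k\<in>UNIV. G j k * (\<Sum>i\<in>UNIV. X i j k * Z i))"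
proof -
  have "(\<Sum>i\<in>UNIV. (\<Sum>j\<in>UNIV. \<Sum>k\<in>UNIV. G j k * X i j k) * Z i)
      = (\<Sum>i\<in>UNIV. \<Sum>j\<in>UNIV. \<Sum>k\<in>UNIV. G j k * (X i j k * Z i))"
    by (simp add: sum_distrib_right mult.assoc)
  also have "\<dots> = (\<Sum>j\<in>UNIV. \<Sum>i\<in>UNIV. \<Sum>k\<in>UNIV. G j k * (X i j k * Z i))" by (rule sum.swap)
  also have "\<dots> = (\<Sum>j\<in>UNIV. \<Sum>k\<in>UNIV. \<Sum>i\<in>UNIV. G j k * (X i j k * Z i))"
    by (rule sum.cong[OF refl]) (rule sum.swap)
  also have "\<dots> = (\<Sum>j\<in>UNIV. \<Sum>k\<in>UNIV. G j k * (\<Sum>i\<in>UNIV. X i j k * Z i))"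
    by (simp add: sum_distrib_left)
  finally show ?thesis .
qed

context alg
begin

definition "trA W = (\<Sum>a\<in>UNIV. \<Sum>b\<in>UNIV. gi a b * W a b)"
definition "hs i j = Ls * (e * P i j)"

lemma hs_hh: "hs i j = p * hh i j" by (simp add: hs_def p_def hh_def)

lemma gi_hh: "dotv (gi j) (\<lambda>h. hh h k) = (if j = k then 1 else 0) - y j * l k / L0"
proof -
  have "(\<lambda>h. hh h k) = (\<lambda>h. g h k - l h * l k)" by (simp add: hh_g)
  then show ?thesis by (simp add: gi_left gi_l)
qed

lemma sum_dotv: "(\<Sum>j\<in>UNIV. U j * V j) = dotv U V" by (simp add: dotv_def)

lemma contr:
  assumes R: "\<And>a. dotv y (W a) = 0" and Cl: "\<And>b. dotv y (\<lambda>a. W a b) = 0"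
  shows "(\<Sum>h\<in>UNIV. \<Sum>j\<in>UNIV. gi h j * wedge W h i j k) = - (real CARD('n) - 3) * W i k - hh i k * trA W"
proof -
  have T1: "(\<Sum>h\<in>UNIV. \<Sum>j\<in>UNIV. gi h j * (hh h k * W i j)) = W i k"
  proof -
    have "(\<Sum>h\<in>UNIV. \<Sum>j\<in>UNIV. gi h j * (hh h k * W i j)) = (\<Sum>j\<in>UNIV. \<Sum>h\<in>UNIV. gi h j * (hh h k * W i j))"
      by (rule sum.swap)
    also have "\<dots> = (\<Sum>j\<in>UNIV. W i j * dotv (\<lambda>h. gi h j) (\<lambda>h. hh h k))"
      by (rule sum.cong[OF refl]) (simp add: dotv_def sum_distrib_left mult_ac)
    also have "\<dots> = (\<Sum>j\<in>UNIV. W i j * dotv (gi j) (\<lambda>h. hh h k))"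
    proof -
      have "(\<lambda>h. gi h j) = gi j" for j by (rule ext) (rule gi_sym)
      then show ?thesis by simp
    qed
    also have "\<dots> = dotv (W i) (\<lambda>j. (if j = k then 1 else 0) - y j * l k / L0)"
      unfolding gi_hh by (unfold dotv_def) (rule refl)
    also have "\<dots> = W i k" using R[of i] by (simp add: dotv_comm[of y])
    finally show ?thesis .
  qed
  have T2: "(\<Sum>h\<in>UNIV. \<Sum>j\<in>UNIV. gi h j * (hh i j * W h k)) = W i k"
  proof -
    have "(\<Sum>h\<in>UNIV. \<Sum>j\<in>UNIV. gi h j * (hh i j * W h k)) = (\<Sum>h\<in>UNIV. W h k * dotv (gi h) (\<lambda>j. hh j i))"
      by (rule sum.cong[OF refl]) (simp add: dotv_def sum_distrib_left hh_sym[of i] mult_ac)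
    also have "\<dots> = dotv (\<lambda>h. W h k) (\<lambda>h. (if h = i then 1 else 0) - y h * l i / L0)"
      unfolding gi_hh by (unfold dotv_def) (rule refl)
    also have "\<dots> = W i k" using Cl[of k] by (simp add: dotv_comm[of y])
    finally show ?thesis .
  qed
  have T3: "(\<Sum>h\<in>UNIV. \<Sum>j\<in>UNIV. gi h j * (hh h j * W i k)) = (real CARD('n) - 1) * W i k"
  proof -
    have "(\<Sum>h\<in>UNIV. \<Sum>j\<in>UNIV. gi h j * (hh h j * W i k)) = W i k * (\<Sum>h\<in>UNIV. dotv (gi h) (\<lambda>j. hh j h))"
      by (simp add: dotv_def sum_distrib_left hh_sym[of _ ] mult_ac)
    also have "(\<Sum>h\<in>UNIV. dotv (gi h) (\<lambda>j. hh j h)) = (\<Sum>h\<in>UNIV. 1 - y h * l h / L0)"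
      by (simp add: gi_hh)
    also have "\<dots> = real CARD('n) - dotv y l / L0"
      by (simp add: sum_subtractf dotv_def sum_divide_distrib)
    also have "\<dots> = real CARD('n) - 1" by (simp add: dotv_comm[of y] eul1)
    finally show ?thesis by simp
  qed
  have T4: "(\<Sum>h\<in>UNIV. \<Sum>j\<in>UNIV. gi h j * (hh i k * W h j)) = hh i k * trA W"
    by (simp add: trA_def sum_distrib_left mult_ac)
  have "(\<Sum>h\<in>UNIV. \<Sum>j\<in>UNIV. gi h j * wedge W h i j k)
     = (\<Sum>h\<in>UNIV. \<Sum>j\<in>UNIV. gi h j * (hh h k * W i j)) + (\<Sum>h\<in>UNIV. \<Sum>j\<in>UNIV. gi h j * (hh i j * W h k))
       - (\<Sum>h\<in>UNIV. \<Sum>j\<in>UNIV. gi h j * (hh h j * W i k)) - (\<Sum>h\<in>UNIV. \<Sum>j\<in>UNIV. gi h j * (hh i k * W h j))"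
    by (simp add: wedge_def algebra_simps sum.distrib sum_subtractf)
  also have "\<dots> = - (real CARD('n) - 3) * W i k - hh i k * trA W"
    unfolding T1 T2 T3 T4 by (simp add: algebra_simps)
  finally show ?thesis .
qed

end



lemma sum2_lin1:
  fixes G X Y :: "'a \<Rightarrow> 'b \<Rightarrow> real"
  shows "(\<Sum>h\<in>A. \<Sum>j\<in>B. G h j * (a * (X h j + Y h j / d)))
     = a * ((\<Sum>h\<in>A. \<Sum>j\<in>B. G h j * X h j) + (\<Sum>h\<in>A. \<Sum>j\<in>B. G h j * Y h j) / d)"
  by (simp add: algebra_simps sum.distrib sum_distrib_left sum_divide_distrib)
lemma sum2_lin2:
  fixes G X Y Z :: "'a \<Rightarrow> 'b \<Rightarrow> real"
  shows "(\<Sum>h\<in>A. \<Sum>j\<in>B. G h j * (X h j + (a * Y h j - Z h j * t) / d))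
     = (\<Sum>h\<in>A. \<Sum>j\<in>B. G h j * X h j) + (a * (\<Sum>h\<in>A. \<Sum>j\<in>B. G h j * Y h j) - (\<Sum>h\<in>A. \<Sum>j\<in>B. G h j * Z h j) * t) / d"
  by (simp add: algebra_simps sum.distrib sum_distrib_left sum_distrib_right sum_divide_distrib sum_subtractf diff_divide_distrib)

lemma Sric_slots:
  assumes A1: "\<And>a b. dotv y (\<lambda>h. cc h a b) = 0" and A2: "\<And>a b. dotv y (\<lambda>h. cc a h b) = 0"
  shows "dotv y (\<lambda>k. SricA G cc i k) = 0" and "dotv y (\<lambda>i. SricA G cc i k) = 0"
  unfolding SricA_def by (simp_all add: dotv_sum2 Sf_slots[OF A1 A2])

context alg
begin

lemma trA_add: "trA (\<lambda>a b. X a b + Y a b) = trA X + trA Y"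
  by (simp add: trA_def algebra_simps sum.distrib)
lemma trA_div: "trA (\<lambda>a b. X a b / r) = trA X / r"
  by (simp add: trA_def sum_divide_distrib)
lemma trA_mult: "trA (\<lambda>a b. X a b * r) = trA X * r"
  unfolding trA_def by (simp add: sum_distrib_right mult.assoc)

lemma trA_hh: "trA hh = real CARD('n) - 1"
proof -
  have "trA hh = (\<Sum>h\<in>UNIV. dotv (gi h) (\<lambda>j. hh j h))"
    by (simp add: trA_def dotv_def hh_sym[of _ ])
  also have "\<dots> = (\<Sum>h\<in>UNIV. 1 - y h * l h / L0)"
    by (simp add: gi_hh)
  also have "\<dots> = real CARD('n) - dotv y l / L0"
    by (simp add: sum_subtractf dotv_def sum_divide_distrib)
  also have "\<dots> = real CARD('n) - 1" by (simp add: dotv_comm[of y] eul1)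
  finally show ?thesis .
qed

lemma trA_mm: "trA (\<lambda>a b. m a * m b) = m2"
  by (simp add: trA_def m2_def B_def dotv_def mv_def sum_distrib_left mult_ac)

lemma V_def': "C a b = dotv (c a b) (mv gi m)" by (simp add: C_def B_def)

lemma C_slots: "dotv y (\<lambda>b. C a b) = 0" "dotv y (\<lambda>a. C a b) = 0"
proof -
  have z2: "(\<lambda>r. dotv y (\<lambda>b. c a b r)) = (\<lambda>r. 0)" using c_y2 by (simp add: dotv_comm[of y])
  have z1: "(\<lambda>r. dotv y (\<lambda>a. c a b r)) = (\<lambda>r. 0)" using c_y1 by (simp add: dotv_comm[of y])
  show "dotv y (\<lambda>b. C a b) = 0" by (simp add: V_def' dotv_swap2 z2)
  show "dotv y (\<lambda>a. C a b) = 0" by (simp add: V_def' dotv_swap2 z1)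
qed

lemma H_slots: "dotv y (H a) = 0" "dotv y (\<lambda>a. H a b) = 0"
proof -
  have e1: "H a = (\<lambda>b. C a b + m a * m b / (2 * Ls) + hh a b * m2 / (4 * Ls))" by (rule ext) (simp add: H_def)
  have e2: "(\<lambda>a. H a b) = (\<lambda>a. C a b + m a * m b / (2 * Ls) + hh a b * m2 / (4 * Ls))" by (rule ext) (simp add: H_def)
  have hy: "dotv y (\<lambda>a. hh a b) = 0" using hh_y'[of b] by (simp add: hh_sym[of _ b])
  show "dotv y (H a) = 0" unfolding e1 using C_slots m_y hh_y' by (simp add: dotv_comm[of y m])
  show "dotv y (\<lambda>a. H a b) = 0" unfolding e2 using C_slots m_y hy by (simp add: dotv_comm[of y m])
qed

lemma trA_C: "trA C = (\<Sum>i\<in>UNIV. cvecA gi c i * (\<Sum>j\<in>UNIV. gi i j * bv j))"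
proof -
  define V where "V = mv gi m"
  have bvm: "bv = (\<lambda>j. m j + (beta / L0) * l j)" by (rule ext) (simp add: m_def)
  have mvb: "(\<Sum>j\<in>UNIV. gi i j * bv j) = V i + beta / L0 * (y i / L0)" for i
  proof -
    have "(\<Sum>j\<in>UNIV. gi i j * bv j) = dotv (gi i) bv" by (simp add: dotv_def)
    also have "\<dots> = dotv (gi i) m + beta / L0 * dotv (gi i) l" by (subst bvm) simp
    also have "\<dots> = V i + beta / L0 * (y i / L0)" by (simp add: V_def mv_apply gi_l)
    finally show ?thesis .
  qed
  have cy: "(\<Sum>i\<in>UNIV. cvecA gi c i * y i) = 0"
  proof -
    have "(\<Sum>i\<in>UNIV. cvecA gi c i * y i) = (\<Sum>j\<in>UNIV. \<Sum>k\<in>UNIV. gi j k * (\<Sum>i\<in>UNIV. c i j k * y i))"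
      unfolding cvecA_def by (rule triple_swap)
    also have "\<dots> = 0" using c_y1 by (simp add: dotv_def)
    finally show ?thesis .
  qed
  have cV: "(\<Sum>i\<in>UNIV. cvecA gi c i * V i) = trA C"
  proof -
    have "(\<Sum>i\<in>UNIV. cvecA gi c i * V i) = (\<Sum>j\<in>UNIV. \<Sum>k\<in>UNIV. gi j k * (\<Sum>i\<in>UNIV. c i j k * V i))"
      unfolding cvecA_def by (rule triple_swap)
    also have "\<dots> = (\<Sum>j\<in>UNIV. \<Sum>k\<in>UNIV. gi j k * dotv (\<lambda>i. c i j k) V)" by (simp add: dotv_def)
    also have "\<dots> = trA C" by (simp add: c_slot1 trA_def V_def' V_def)
    finally show ?thesis .
  qed
  have "(\<Sum>i\<in>UNIV. cvecA gi c i * (\<Sum>j\<in>UNIV. gi i j * bv j))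
      = (\<Sum>i\<in>UNIV. cvecA gi c i * V i) + beta / L0 / L0 * (\<Sum>i\<in>UNIV. cvecA gi c i * y i)"
    unfolding mvb by (simp add: algebra_simps sum.distrib sum_distrib_left sum_divide_distrib)
  then show ?thesis using cy cV by simp
qed

lemma trA_H: "trA H = trA C + m2 / (2 * Ls) + (real CARD('n) - 1) * m2 / (4 * Ls)"
proof -
  have "trA H = trA (\<lambda>a b. C a b + m a * m b / (2 * Ls) + hh a b * m2 / (4 * Ls))"
    by (simp add: H_def[abs_def])
  also have "\<dots> = trA C + trA (\<lambda>a b. m a * m b) / (2 * Ls) + trA hh * m2 / (4 * Ls)"
    by (simp only: trA_add trA_div trA_mult)
  finally show ?thesis by (simp add: trA_mm trA_hh)
qed

lemma msq_m2: "msqA gi m = m2"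
  by (simp add: msqA_def m2_def B_def dotv_def mv_def sum_distrib_left mult_ac)

lemma HfA_H: "HfA gi c hh m Ls i j = H i j"
proof -
  have "(\<Sum>r\<in>UNIV. cmixA gi c i r j * m r) = dotv m (mv gi (c i j))"
    by (simp add: cmixA_def dotv_def mv_def mult_ac)
  also have "\<dots> = C i j" using Bv4 by (simp add: B_def)
  finally show ?thesis by (simp add: HfA_def H_def msq_m2)
qed

lemma Abeta_tr: "AbetaA gi c bv m Ls = trA H"
  by (simp add: AbetaA_def trA_H trA_C msq_m2 field_simps)

lemma Sric_star: "SricA gsi cs i k = SricA gi c i k + (- (real CARD('n) - 3) * H i k - hh i k * trA H) / (2 * Ls)"
proof -
  have A1: "dotv y (\<lambda>h. cs h a b) = 0" for a b using cs_y1 by (simp add: dotv_comm[of y])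
  have A2: "dotv y (\<lambda>h. cs a h b) = 0" for a b using cs_y2 by (simp add: dotv_comm[of y])
  have "SricA gsi cs i k = (\<Sum>h\<in>UNIV. \<Sum>j\<in>UNIV. gsi h j * SfA gsi cs h i j k)" by (simp add: SricA_def)
  also have "\<dots> = (\<Sum>h\<in>UNIV. \<Sum>j\<in>UNIV. gi h j * SfA gsi cs h i j k) / p"
    by (rule trace_s) (simp_all add: dotv_comm[of _ y] Sf_slots[OF A1 A2])
  also have "\<dots> = (\<Sum>h\<in>UNIV. \<Sum>j\<in>UNIV. gi h j * SfA gi c h i j k) + (\<Sum>h\<in>UNIV. \<Sum>j\<in>UNIV. gi h j * wedge H h i j k) / (2 * Ls)"
    by (simp add: S_star sum2_lin1)
  also have "(\<Sum>h\<in>UNIV. \<Sum>j\<in>UNIV. gi h j * wedge H h i j k) = - (real CARD('n) - 3) * H i k - hh i k * trA H"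
    by (rule contr) (simp_all add: H_slots)
  finally show ?thesis by (simp add: SricA_def)
qed

lemma Sscal_star: "SscalA gsi cs = (SscalA gi c - (2 * real CARD('n) - 4) * trA H / (2 * Ls)) / p"
proof -
  have A1: "dotv y (\<lambda>h. cs h a b) = 0" for a b using cs_y1 by (simp add: dotv_comm[of y])
  have A2: "dotv y (\<lambda>h. cs a h b) = 0" for a b using cs_y2 by (simp add: dotv_comm[of y])
  have "SscalA gsi cs = (\<Sum>i\<in>UNIV. \<Sum>k\<in>UNIV. gsi i k * SricA gsi cs i k)" by (simp add: SscalA_def)
  also have "\<dots> = (\<Sum>i\<in>UNIV. \<Sum>k\<in>UNIV. gi i k * SricA gsi cs i k) / p"
    by (rule trace_s) (simp_all add: dotv_comm[of _ y] Sric_slots[OF A1 A2])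
  also have "(\<Sum>i\<in>UNIV. \<Sum>k\<in>UNIV. gi i k * SricA gsi cs i k)
     = SscalA gi c + (- (real CARD('n) - 3) * trA H - trA hh * trA H) / (2 * Ls)"
    unfolding Sric_star sum2_lin2 by (simp add: SscalA_def trA_def)
  also have "- (real CARD('n) - 3) * trA H - trA hh * trA H = - ((2 * real CARD('n) - 4) * trA H)"
    by (simp add: trA_hh algebra_simps)
  finally show ?thesis by simp
qed

end



lemma zeta_alg0:
  fixes L0 Ls e n1 n2 S0 W SS A a b c d :: real
  assumes "L0 \<noteq> 0" "Ls \<noteq> 0" "e \<noteq> 0" "n1 \<noteq> 0" "n2 \<noteq> 0"
  shows "1 / Ls * ((e * Ls / L0) * (S0 + W / (2 * Ls)) - (SS - (2 * n2) * A / (2 * Ls)) / (e * Ls / L0) / (n1 * n2) * ((e * Ls / L0) * a * ((e * Ls / L0) * b) - (e * Ls / L0) * c * ((e * Ls / L0) * d)))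
       - e * (1 / L0 * (S0 - SS / (n1 * n2) * (a * b - c * d)))
       = e / (2 * L0 * Ls) * (W + 2 * A / n1 * (a * b - c * d))"
  using assms by (simp add: field_simps)

context alg
begin

definition "K a b = H a b - trA H / (real CARD('n) - 1) * hh a b"

lemma n_facts: "real CARD('n) - 1 \<noteq> 0" "real CARD('n) - 2 \<noteq> 0" "real CARD('n) - 3 \<noteq> 0"
  using card_gt by auto

lemma zeta_diff: "zetaA Ls gsi cs hs h i j k - e * zetaA L0 gi c hh h i j k = e / (2 * L0 * Ls) * wedge K h i j k"
proof -
  let ?n1 = "real CARD('n) - 1" and ?n2 = "real CARD('n) - 2"
  have n4: "(2 * real CARD('n) - 4) = 2 * ?n2" by simp
  have "zetaA Ls gsi cs hs h i j k - e * zetaA L0 gi c hh h i j k =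
     1 / Ls * ((e * Ls / L0) * (SfA gi c h i j k + wedge H h i j k / (2 * Ls))
       - (SscalA gi c - (2 * ?n2) * trA H / (2 * Ls)) / (e * Ls / L0) / (?n1 * ?n2)
         * ((e * Ls / L0) * hh i k * ((e * Ls / L0) * hh j h) - (e * Ls / L0) * hh i j * ((e * Ls / L0) * hh h k)))
       - e * (1 / L0 * (SfA gi c h i j k - SscalA gi c / (?n1 * ?n2) * (hh i k * hh j h - hh i j * hh h k)))"
    by (simp only: zetaA_def S_star Sscal_star hs_hh p_def n4)
  also have "\<dots> = e / (2 * L0 * Ls) * (wedge H h i j k + 2 * trA H / ?n1 * (hh i k * hh j h - hh i j * hh h k))"
    by (rule zeta_alg0) (use n_facts in auto)
  also have "wedge H h i j k + 2 * trA H / ?n1 * (hh i k * hh j h - hh i j * hh h k) = wedge K h i j k"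
    unfolding wedge_def K_def by (simp add: hh_sym[of j h] algebra_simps)
  finally show ?thesis .
qed

lemma K_slots: "dotv y (K a) = 0" "dotv y (\<lambda>a. K a b) = 0"
proof -
  have hy: "dotv y (\<lambda>a. hh a b) = 0" using hh_y'[of b] by (simp add: hh_sym[of _ b])
  have e1: "K a = (\<lambda>b. H a b - trA H / (real CARD('n) - 1) * hh a b)" by (rule ext) (simp add: K_def)
  have e2: "(\<lambda>a. K a b) = (\<lambda>a. H a b - trA H / (real CARD('n) - 1) * hh a b)" by (rule ext) (simp add: K_def)
  show "dotv y (K a) = 0" unfolding e1 using H_slots hh_y' by simp
  show "dotv y (\<lambda>a. K a b) = 0" unfolding e2 using H_slots hy by simp
qed

lemma trA_K: "trA K = 0"
proof -
  have kk: "K = (\<lambda>a b. H a b - trA H / (real CARD('n) - 1) * hh a b)" by (rule ext, rule ext) (simp add: K_def)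
  have gen: "trA (\<lambda>a b. X a b - t * Y a b) = trA X - t * trA Y" for X Y t
    unfolding trA_def by (simp add: right_diff_distrib sum_subtractf sum_distrib_left mult.left_commute)
  have "trA K = trA H - trA H / (real CARD('n) - 1) * trA hh"
    unfolding kk by (rule gen)
  then show ?thesis using n_facts by (simp add: trA_hh)
qed

lemma equiv_alg:
  "(\<forall>h i j k. zetaA Ls gsi cs hs h i j k = e * zetaA L0 gi c hh h i j k)
   \<longleftrightarrow> (\<forall>i j. H i j = 1 / (real CARD('n) - 1) * trA H * hh i j)"
proof
  assume A: "\<forall>h i j k. zetaA Ls gsi cs hs h i j k = e * zetaA L0 gi c hh h i j k"
  have w0: "wedge K h i j k = 0" for h i j k
  proof -
    have "e / (2 * L0 * Ls) * wedge K h i j k = 0" using A zeta_diff[of h i j k] by simp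
    then show ?thesis by simp
  qed
  show "\<forall>i j. H i j = 1 / (real CARD('n) - 1) * trA H * hh i j"
  proof (intro allI)
    fix i k
    have "- (real CARD('n) - 3) * K i k - hh i k * trA K = 0"
      using contr[of K i k] K_slots w0 by simp
    then have "K i k = 0" using n_facts trA_K by simp
    then show "H i k = 1 / (real CARD('n) - 1) * trA H * hh i k" by (simp add: K_def)
  qed
next
  assume B: "\<forall>i j. H i j = 1 / (real CARD('n) - 1) * trA H * hh i j"
  have "K a b = 0" for a b using B by (simp add: K_def)
  then have "wedge K h i j k = 0" for h i j k by (simp add: wedge_def)
  then show "\<forall>h i j k. zetaA Ls gsi cs hs h i j k = e * zetaA L0 gi c hh h i j k"
    using zeta_diff by (metis eq_iff_diff_eq_0 mult_zero_right)
qed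

end


definition HD :: "(real^'n \<Rightarrow> real) \<Rightarrow> ('n \<Rightarrow> real^'n \<Rightarrow> real) \<Rightarrow> real^'n \<Rightarrow> bool" where
  "HD G G1 z \<longleftrightarrow> (G has_derivative (\<lambda>v. \<Sum>i\<in>UNIV. v$i * G1 i z)) (at z)"

lemma has_derivative_eqI: "(f has_derivative f') F \<Longrightarrow> (\<And>v. f' v = f'' v) \<Longrightarrow> (f has_derivative f'') F"
proof -
  assume "(f has_derivative f') F" "\<And>v. f' v = f'' v"
  then show ?thesis by (metis ext)
qed

lemma sum_axis: "(\<Sum>k\<in>UNIV. (axis i (1::real))$k * G k) = G i"
proof -
  have "\<And>k. (axis i (1::real))$k * G k = (if k = i then G i else 0)" by (simp add: axis_def)
  then show ?thesis by simp
qed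

lemma HD_add: "HD G G1 z \<Longrightarrow> HD K K1 z \<Longrightarrow> HD (\<lambda>w. G w + K w) (\<lambda>i w. G1 i w + K1 i w) z"
  unfolding HD_def
  by (rule has_derivative_eqI, rule has_derivative_add) (auto simp: algebra_simps sum.distrib)

lemma HD_cmult: "HD G G1 z \<Longrightarrow> HD (\<lambda>w. a * G w) (\<lambda>i w. a * G1 i w) z"
  unfolding HD_def
  by (rule has_derivative_eqI, rule has_derivative_mult_right) (auto simp: algebra_simps sum_distrib_left)

lemma HD_mult: "HD G G1 z \<Longrightarrow> HD K K1 z \<Longrightarrow> HD (\<lambda>w. G w * K w) (\<lambda>i w. G1 i w * K w + G w * K1 i w) z"
  unfolding HD_def
  by (rule has_derivative_eqI, rule has_derivative_mult)
    (auto simp: algebra_simps sum.distrib sum_distrib_left sum_distrib_right)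

lemma HD_const: "HD (\<lambda>w. a) (\<lambda>i w. 0) z"
  unfolding HD_def by simp

lemma HD_inner: "HD (\<lambda>w. b \<bullet> w) (\<lambda>i w. b $ i) z"
  unfolding HD_def
  by (rule has_derivative_eqI, rule has_derivative_inner_right[OF has_derivative_ident])
    (simp add: inner_vec_def mult.commute)

lemma HD_transform: "HD G G1 z \<Longrightarrow> open S \<Longrightarrow> z \<in> S \<Longrightarrow> (\<And>w. w \<in> S \<Longrightarrow> G w = K w) \<Longrightarrow> HD K G1 z"
  unfolding HD_def by (rule has_derivative_transform_within_open)

lemma HD_line:
  assumes "HD G G1 (p + s *\<^sub>R v)"
  shows "((\<lambda>s. G (p + s *\<^sub>R v)) has_real_derivative (\<Sum>k\<in>UNIV. v$k * G1 k (p + s *\<^sub>R v))) (at s)"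
proof -
  have l: "((\<lambda>s. p + s *\<^sub>R v) has_derivative (\<lambda>t. t *\<^sub>R v)) (at s)"
    by (auto intro!: derivative_eq_intros)
  have "((\<lambda>s. G (p + s *\<^sub>R v)) has_derivative (\<lambda>t. \<Sum>k\<in>UNIV. (t *\<^sub>R v)$k * G1 k (p + s *\<^sub>R v))) (at s)"
    using has_derivative_compose[OF l assms[unfolded HD_def]] .
  then show ?thesis unfolding has_field_derivative_def
    by (rule has_derivative_eqI) (auto simp: sum_distrib_right intro!: sum.cong)
qed

lemma dy_HD: assumes "HD G G1 z" shows "dy G i z = G1 i z"
proof -
  have "HD G G1 (z + 0 *\<^sub>R axis i 1)" using assms by simp
  from HD_line[OF this] have "((\<lambda>s. G (z + s *\<^sub>R axis i 1)) has_real_derivative G1 i z) (at 0)"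
    by (simp add: sum_axis)
  then show ?thesis unfolding dy_def by (rule DERIV_imp_deriv)
qed

lemma HD_unique: "HD G G1 z \<Longrightarrow> (G has_derivative D) (at z) \<Longrightarrow> D (axis i 1) = G1 i z"
proof -
  assume a: "HD G G1 z" and b: "(G has_derivative D) (at z)"
  have "D = (\<lambda>v. \<Sum>i\<in>UNIV. v$i * G1 i z)"
    using has_derivative_unique[OF b a[unfolded HD_def]] .
  then show ?thesis by (simp add: sum_axis)
qed


lemma lin_expand:
  fixes L :: "real^'n \<Rightarrow> real"
  assumes "linear L"
  shows "L v = (\<Sum>i\<in>UNIV. v$i * L (axis i 1))"
proof -
  have "v = (\<Sum>i\<in>UNIV. v$i *\<^sub>R axis i 1)"
    using basis_expansion[of v] by (simp add: scalar_mult_eq_scaleR)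
  then have "L v = L (\<Sum>i\<in>UNIV. v$i *\<^sub>R axis i 1)" by simp
  also have "\<dots> = (\<Sum>i\<in>UNIV. v$i * L (axis i 1))"
    using assms by (simp add: linear_sum linear_scale)
  finally show ?thesis .
qed

definition Dv :: "('a::real_normed_vector \<Rightarrow> real) \<Rightarrow> 'a \<Rightarrow> 'a \<Rightarrow> real" where
  "Dv g v = (\<lambda>p. frechet_derivative g (at p) v)"

definition PD :: "((real^'n) \<times> (real^'n) \<Rightarrow> real) \<Rightarrow> 'n \<Rightarrow> (real^'n) \<times> (real^'n) \<Rightarrow> real" where
  "PD g i = Dv g (0, axis i 1)"

lemma HD_restrict:
  fixes g :: "(real^'n) \<times> (real^'n) \<Rightarrow> real"
  assumes "g differentiable (at (x, z))"
  shows "HD (\<lambda>w. g (x, w)) (\<lambda>i w. PD g i (x, w)) z"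
proof -
  let ?D = "frechet_derivative g (at (x, z))"
  have d: "(g has_derivative ?D) (at (x, z))" using assms frechet_derivative_works by blast
  have p: "((\<lambda>w. (x, w)) has_derivative (\<lambda>v. (0, v))) (at z)"
    by (auto intro!: derivative_eq_intros)
  have c: "((\<lambda>w. g (x, w)) has_derivative (\<lambda>v. ?D (0, v))) (at z)"
    using has_derivative_compose[OF p d] by simp
  have lin: "linear (\<lambda>v. ?D (0, v))" using has_derivative_linear[OF c] .
  show ?thesis unfolding HD_def
    by (rule has_derivative_eqI[OF c]) (subst lin_expand[OF lin], simp add: PD_def Dv_def)
qed

lemma Ck_cont: "Ck_on k S f \<Longrightarrow> continuous_on S f"
  by (cases k) (auto intro: differentiable_imp_continuous_on)

lemma Ck_diff: "Ck_on (Suc k) S f \<Longrightarrow> open S \<Longrightarrow> p \<in> S \<Longrightarrow> f differentiable (at p)"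
  by (auto simp: differentiable_on_eq_differentiable_at)

lemma Ck_D: "Ck_on (Suc k) S f \<Longrightarrow> Ck_on k S (Dv f v)"
  by (simp add: Dv_def)

lemma Ck_mono: "Ck_on (Suc k) S f \<Longrightarrow> Ck_on k S f"
proof (induction k arbitrary: f)
  case 0 then show ?case by (auto intro: differentiable_imp_continuous_on)
next
  case (Suc k) then show ?case by auto
qed


lemma jets_formulas:
  assumes Y: "open Y" and z: "z \<in> Y"
    and h0: "\<And>w. w \<in> Y \<Longrightarrow> HD G G1 w"
    and h1: "\<And>w i. w \<in> Y \<Longrightarrow> HD (G1 i) (G2 i) w"
    and h2: "\<And>w i j. w \<in> Y \<Longrightarrow> HD (G2 i j) (G3 i j) w"
  shows "lcov G i z = G1 i z"
    and "gf G i j z = G1 i z * G1 j z + G z * G2 j i z"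
    and "cf G i j k z = (G2 i k z * G1 j z + G1 i z * G2 j k z + G1 k z * G2 j i z + G z * G3 j i k z) / 2"
proof -
  show "lcov G i z = G1 i z" unfolding lcov_def by (rule dy_HD[OF h0[OF z]])
  have gfw: "gf G a b w = G1 a w * G1 b w + G w * G2 b a w" if w: "w \<in> Y" for a b w
  proof -
    have sq: "(\<lambda>w. (G w)\<^sup>2) = (\<lambda>w. G w * G w)" by (simp add: power2_eq_square)
    have inner: "dy (\<lambda>w. (G w)\<^sup>2) b u = G1 b u * G u + G u * G1 b u" if "u \<in> Y" for u
      unfolding sq by (rule dy_HD[OF HD_mult[OF h0 h0]]) (use that in auto)
    have HPsi: "HD (\<lambda>u. G1 b u * G u + G u * G1 b u)
        (\<lambda>k u. (G2 b k u * G u + G1 b u * G1 k u) + (G1 k u * G1 b u + G u * G2 b k u)) w"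
      by (rule HD_add[OF HD_mult[OF h1 h0] HD_mult[OF h0 h1]]) (use w in auto)
    have HPhi: "HD (\<lambda>u. dy (\<lambda>w. (G w)\<^sup>2) b u)
        (\<lambda>k u. (G2 b k u * G u + G1 b u * G1 k u) + (G1 k u * G1 b u + G u * G2 b k u)) w"
      by (rule HD_transform[OF HPsi Y w]) (simp add: inner)
    show ?thesis unfolding gf_def dy_HD[OF HPhi] by (simp add: algebra_simps)
  qed
  then show "gf G i j z = G1 i z * G1 j z + G z * G2 j i z" using z by simp
  have HPsi: "HD (\<lambda>u. G1 i u * G1 j u + G u * G2 j i u)
      (\<lambda>k u. (G2 i k u * G1 j u + G1 i u * G2 j k u) + (G1 k u * G2 j i u + G u * G3 j i k u)) z"
    by (rule HD_add[OF HD_mult[OF h1 h1] HD_mult[OF h0 h2]]) (use z in auto)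
  have HPhi: "HD (\<lambda>u. gf G i j u)
      (\<lambda>k u. (G2 i k u * G1 j u + G1 i u * G2 j k u) + (G1 k u * G2 j i u + G u * G3 j i k u)) z"
    by (rule HD_transform[OF HPsi Y z]) (simp add: gfw)
  show "cf G i j k z = (G2 i k z * G1 j z + G1 i z * G2 j k z + G1 k z * G2 j i z + G z * G3 j i k z) / 2"
    unfolding cf_def dy_HD[OF HPhi] by (simp add: algebra_simps)
qed

lemma star_jets:
  assumes h0: "HD G G1 w" and h1: "\<And>i. HD (G1 i) (G2 i) w" and h2: "\<And>i j. HD (G2 i j) (G3 i j) w"
  shows "HD (\<lambda>u. e * G u + b \<bullet> u) (\<lambda>i u. e * G1 i u + b $ i) w"
    and "HD (\<lambda>u. e * G1 i u + b $ i) (\<lambda>j u. e * G2 i j u) w"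
    and "HD (\<lambda>u. e * G2 i j u) (\<lambda>k u. e * G3 i j k u) w"
proof -
  show "HD (\<lambda>u. e * G u + b \<bullet> u) (\<lambda>i u. e * G1 i u + b $ i) w"
    by (rule HD_add[OF HD_cmult[OF h0] HD_inner])
  show "HD (\<lambda>u. e * G1 i u + b $ i) (\<lambda>j u. e * G2 i j u) w"
    using HD_add[OF HD_cmult[OF h1[of i]] HD_const, of e "b $ i"] by simp
  show "HD (\<lambda>u. e * G2 i j u) (\<lambda>k u. e * G3 i j k u) w"
    by (rule HD_cmult[OF h2])
qed


lemma norm_box: "norm (a *\<^sub>R axis i (1::real) + b *\<^sub>R axis j 1 :: real^'n) \<le> \<bar>a\<bar> + \<bar>b\<bar>"
proof -
  have "norm (a *\<^sub>R axis i (1::real) + b *\<^sub>R axis j 1 :: real^'n) \<le> norm (a *\<^sub>R axis i (1::real) :: real^'n) + norm (b *\<^sub>R axis j (1::real) :: real^'n)"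
    by (rule norm_triangle_ineq)
  also have "\<dots> = \<bar>a\<bar> + \<bar>b\<bar>" by simp
  finally show ?thesis .
qed

lemma mixed_mvt:
  fixes G :: "real^'n \<Rightarrow> real"
  assumes d: "\<delta> > 0" and s: "s > 0" "2 * s < \<delta>"
    and h0: "\<And>w. w \<in> ball z \<delta> \<Longrightarrow> HD G G1 w"
    and h1: "\<And>w. w \<in> ball z \<delta> \<Longrightarrow> HD (G1 i) (G2 i) w"
  shows "\<exists>\<xi>\<in>ball z \<delta>. G (z + s *\<^sub>R axis i 1 + s *\<^sub>R axis j 1) - G (z + s *\<^sub>R axis i 1)
            - G (z + s *\<^sub>R axis j 1) + G z = s * s * G2 i j \<xi>"
proof -
  define ei :: "real^'n" where "ei = axis i 1"
  define ej :: "real^'n" where "ej = axis j 1"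
  have inb: "z + a *\<^sub>R ei + b *\<^sub>R ej \<in> ball z \<delta>" if "0 \<le> a" "a \<le> s" "0 \<le> b" "b \<le> s" for a b
  proof -
    have "norm (a *\<^sub>R ei + b *\<^sub>R ej) \<le> \<bar>a\<bar> + \<bar>b\<bar>" unfolding ei_def ej_def by (rule norm_box)
    also have "\<dots> < \<delta>" using that s by auto
    finally have "norm (a *\<^sub>R ei + b *\<^sub>R ej) < \<delta>" .
    moreover have "dist z (z + (a *\<^sub>R ei + b *\<^sub>R ej)) = norm (a *\<^sub>R ei + b *\<^sub>R ej)"
      by (metis add_diff_cancel_left' dist_commute dist_norm)
    ultimately show ?thesis by (simp add: add.assoc)
  qed
  define \<phi> where "\<phi> = (\<lambda>a. G (z + a *\<^sub>R ei + s *\<^sub>R ej) - G (z + a *\<^sub>R ei))"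
  have dphi: "DERIV \<phi> a :> G1 i (z + a *\<^sub>R ei + s *\<^sub>R ej) - G1 i (z + a *\<^sub>R ei)" if "0 \<le> a" "a \<le> s" for a
  proof -
    have p1: "z + s *\<^sub>R ej + a *\<^sub>R ei = z + a *\<^sub>R ei + s *\<^sub>R ej" by (simp add: algebra_simps)
    have A: "HD G G1 ((z + s *\<^sub>R ej) + a *\<^sub>R ei)" unfolding p1 using inb[of a s] that s by (auto intro: h0)
    have B: "HD G G1 (z + a *\<^sub>R ei)" using inb[of a 0] that s h0 by auto
    have dA: "((\<lambda>a. G ((z + s *\<^sub>R ej) + a *\<^sub>R ei)) has_real_derivative G1 i ((z + s *\<^sub>R ej) + a *\<^sub>R ei)) (at a)"
      using HD_line[OF A] by (simp add: ei_def sum_axis)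
    have dB: "((\<lambda>a. G (z + a *\<^sub>R ei)) has_real_derivative G1 i (z + a *\<^sub>R ei)) (at a)"
      using HD_line[OF B] by (simp add: ei_def sum_axis)
    have fe: "(\<lambda>a. G ((z + s *\<^sub>R ej) + a *\<^sub>R ei)) = (\<lambda>a. G (z + a *\<^sub>R ei + s *\<^sub>R ej))"
      by (simp add: algebra_simps)
    have fe2: "(\<lambda>a. G (z + a *\<^sub>R ei + s *\<^sub>R ej) - G (z + a *\<^sub>R ei)) = (\<lambda>x. G (z + s *\<^sub>R ej + x *\<^sub>R ei) - G (z + x *\<^sub>R ei))"
      by (rule ext) (simp add: algebra_simps)
    show ?thesis unfolding \<phi>_def fe2 using DERIV_diff[OF dA dB] p1 by simp
  qed
  obtain a0 where a0: "0 < a0" "a0 < s" and m1: "\<phi> s - \<phi> 0 = (s - 0) * (G1 i (z + a0 *\<^sub>R ei + s *\<^sub>R ej) - G1 i (z + a0 *\<^sub>R ei))"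
    using MVT2[of 0 s \<phi> "\<lambda>a. G1 i (z + a *\<^sub>R ei + s *\<^sub>R ej) - G1 i (z + a *\<^sub>R ei)"] dphi s by auto
  define \<psi> where "\<psi> = (\<lambda>b. G1 i (z + a0 *\<^sub>R ei + b *\<^sub>R ej))"
  have dpsi: "DERIV \<psi> b :> G2 i j (z + a0 *\<^sub>R ei + b *\<^sub>R ej)" if "0 \<le> b" "b \<le> s" for b
  proof -
    have A: "HD (G1 i) (G2 i) ((z + a0 *\<^sub>R ei) + b *\<^sub>R ej)" using inb[of a0 b] that a0 h1 by auto
    show ?thesis unfolding \<psi>_def using HD_line[OF A] by (simp add: ej_def sum_axis)
  qed
  obtain b0 where b0: "0 < b0" "b0 < s" and m2: "\<psi> s - \<psi> 0 = (s - 0) * G2 i j (z + a0 *\<^sub>R ei + b0 *\<^sub>R ej)"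
    using MVT2[of 0 s \<psi> "\<lambda>b. G2 i j (z + a0 *\<^sub>R ei + b *\<^sub>R ej)"] dpsi s by auto
  have "G (z + s *\<^sub>R ei + s *\<^sub>R ej) - G (z + s *\<^sub>R ei) - G (z + s *\<^sub>R ej) + G z = \<phi> s - \<phi> 0"
    by (simp add: \<phi>_def)
  also have "\<dots> = s * (\<psi> s - \<psi> 0)" using m1 by (simp add: \<psi>_def)
  also have "\<dots> = s * s * G2 i j (z + a0 *\<^sub>R ei + b0 *\<^sub>R ej)" using m2 by simp
  finally show ?thesis using inb[of a0 b0] a0 b0 unfolding ei_def ej_def by auto
qed

lemma absfact: fixes a b x y :: real
  shows "\<bar>a - x\<bar> < \<bar>x - y\<bar> / 2 \<Longrightarrow> \<bar>b - y\<bar> < \<bar>x - y\<bar> / 2 \<Longrightarrow> a = b \<Longrightarrow> False"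
  by (auto simp: abs_if split: if_splits)

lemma clairaut:
  fixes G :: "real^'n \<Rightarrow> real"
  assumes Y: "open Y" and z: "z \<in> Y"
    and h0: "\<And>w. w \<in> Y \<Longrightarrow> HD G G1 w"
    and h1: "\<And>w k. w \<in> Y \<Longrightarrow> HD (G1 k) (G2 k) w"
    and c1: "continuous_on Y (G2 i j)" and c2: "continuous_on Y (G2 j i)"
  shows "G2 i j z = G2 j i z"
proof (rule ccontr)
  assume ne: "G2 i j z \<noteq> G2 j i z"
  define \<epsilon> where "\<epsilon> = \<bar>G2 i j z - G2 j i z\<bar> / 2"
  have ep: "\<epsilon> > 0" using ne by (simp add: \<epsilon>_def)
  obtain d1 where d1: "d1 > 0" "\<And>w. w \<in> Y \<Longrightarrow> dist w z < d1 \<Longrightarrow> dist (G2 i j w) (G2 i j z) < \<epsilon>"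
    using c1 z ep unfolding continuous_on_iff by (metis dist_commute)
  obtain d2 where d2: "d2 > 0" "\<And>w. w \<in> Y \<Longrightarrow> dist w z < d2 \<Longrightarrow> dist (G2 j i w) (G2 j i z) < \<epsilon>"
    using c2 z ep unfolding continuous_on_iff by (metis dist_commute)
  obtain d3 where d3: "d3 > 0" "ball z d3 \<subseteq> Y" using Y z open_contains_ball by blast
  define \<delta> where "\<delta> = min d1 (min d2 d3)"
  have dpos: "\<delta> > 0" using d1 d2 d3 by (simp add: \<delta>_def)
  have bY: "ball z \<delta> \<subseteq> Y" using d3 by (auto simp: \<delta>_def)
  define s where "s = \<delta> / 3"
  have s: "s > 0" "2 * s < \<delta>" using dpos by (auto simp: s_def)
  obtain \<xi>1 where x1: "\<xi>1 \<in> ball z \<delta>" and e1: "G (z + s *\<^sub>R axis i 1 + s *\<^sub>R axis j 1) - G (z + s *\<^sub>R axis i 1)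
            - G (z + s *\<^sub>R axis j 1) + G z = s * s * G2 i j \<xi>1"
    using mixed_mvt[OF dpos s, of z G G1 i G2 j] bY h0 h1 by blast
  obtain \<xi>2 where x2: "\<xi>2 \<in> ball z \<delta>" and e2: "G (z + s *\<^sub>R axis j 1 + s *\<^sub>R axis i 1) - G (z + s *\<^sub>R axis j 1)
            - G (z + s *\<^sub>R axis i 1) + G z = s * s * G2 j i \<xi>2"
    using mixed_mvt[OF dpos s, of z G G1 j G2 i] bY h0 h1 by blast
  have "s * s * G2 i j \<xi>1 = s * s * G2 j i \<xi>2" using e1 e2 by (simp add: algebra_simps)
  then have eq: "G2 i j \<xi>1 = G2 j i \<xi>2" using s by simp
  have y1: "\<xi>1 \<in> Y" "\<xi>2 \<in> Y" using x1 x2 bY by auto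
  have "dist \<xi>1 z < d1" "dist \<xi>2 z < d2" using x1 x2 by (auto simp: \<delta>_def dist_commute)
  then have "dist (G2 i j \<xi>1) (G2 i j z) < \<epsilon>" "dist (G2 j i \<xi>2) (G2 j i z) < \<epsilon>"
    using d1(2)[OF y1(1)] d2(2)[OF y1(2)] by auto
  then show False using eq absfact unfolding \<epsilon>_def dist_real_def by blast
qed


lemma euler_gen:
  assumes hd: "HD G G1 y" and hom: "\<And>t. t > 0 \<Longrightarrow> G (t *\<^sub>R y) = c t * G y"
    and dc: "(c has_real_derivative c') (at 1)"
  shows "(\<Sum>k\<in>UNIV. y$k * G1 k y) = c' * G y"
proof -
  have "HD G G1 (0 + 1 *\<^sub>R y)" using hd by simp
  from HD_line[OF this] have d1: "((\<lambda>s. G (0 + s *\<^sub>R y)) has_real_derivative (\<Sum>k\<in>UNIV. y$k * G1 k y)) (at 1)"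
    by simp
  have d2: "((\<lambda>s. c s * G y) has_real_derivative c' * G y) (at 1)" by (rule DERIV_cmult_right[OF dc])
  have d3: "((\<lambda>s. c s * G y) has_real_derivative (\<Sum>k\<in>UNIV. y$k * G1 k y)) (at 1)"
    by (rule has_field_derivative_transform_within_open[OF d1, of "{0<..}"]) (auto simp: hom)
  show ?thesis using DERIV_unique[OF d3 d2] .
qed

lemma hom_deriv:
  assumes Y: "open Y" and w: "w \<in> Y" and t: "t > 0"
    and hw: "HD G G1 w" and htw: "HD G G1 (t *\<^sub>R w)"
    and hom: "\<And>w'. w' \<in> Y \<Longrightarrow> G (t *\<^sub>R w') = c * G w'"
  shows "t * G1 i (t *\<^sub>R w) = c * G1 i w"
proof -
  have l: "((\<lambda>w'. t *\<^sub>R w') has_derivative (\<lambda>v. t *\<^sub>R v)) (at w)"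
    by (auto intro!: derivative_eq_intros)
  have d: "((\<lambda>w'. G (t *\<^sub>R w')) has_derivative (\<lambda>v. \<Sum>k\<in>UNIV. (t *\<^sub>R v)$k * G1 k (t *\<^sub>R w))) (at w)"
    using has_derivative_compose[OF l htw[unfolded HD_def]] .
  have d': "((\<lambda>w'. c * G w') has_derivative (\<lambda>v. \<Sum>k\<in>UNIV. (t *\<^sub>R v)$k * G1 k (t *\<^sub>R w))) (at w)"
    by (rule has_derivative_transform_within_open[OF d Y w]) (simp add: hom)
  have "(\<lambda>v. \<Sum>k\<in>UNIV. (t *\<^sub>R v)$k * G1 k (t *\<^sub>R w)) (axis i 1) = c * G1 i w"
    using HD_unique[OF HD_cmult[OF hw] d'] .
  moreover have "(\<lambda>v. \<Sum>k\<in>UNIV. (t *\<^sub>R v)$k * G1 k (t *\<^sub>R w)) (axis i 1) = t * G1 i (t *\<^sub>R w)"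
  proof -
    have "(\<Sum>k\<in>UNIV. (t *\<^sub>R axis i (1::real))$k * G1 k (t *\<^sub>R w)) = t * (\<Sum>k\<in>UNIV. (axis i (1::real))$k * G1 k (t *\<^sub>R w))"
      by (simp add: sum_distrib_left mult.assoc)
    then show ?thesis by (simp add: sum_axis)
  qed
  ultimately show ?thesis by simp
qed

lemma euler_all:
  fixes G :: "real^'n \<Rightarrow> real"
  defines "Y \<equiv> UNIV - {0::real^'n}"
  assumes h0: "\<And>w. w \<in> Y \<Longrightarrow> HD G G1 w"
    and h1: "\<And>w i. w \<in> Y \<Longrightarrow> HD (G1 i) (G2 i) w"
    and h2: "\<And>w i j. w \<in> Y \<Longrightarrow> HD (G2 i j) (G3 i j) w"
    and hom: "\<And>t w. t > 0 \<Longrightarrow> G (t *\<^sub>R w) = t * G w"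
    and y: "y \<in> Y"
  shows "(\<Sum>k\<in>UNIV. y$k * G1 k y) = G y"
    and "(\<Sum>k\<in>UNIV. y$k * G2 i k y) = 0"
    and "(\<Sum>k\<in>UNIV. y$k * G3 i j k y) = - G2 i j y"
proof -
  have Yo: "open Y" unfolding Y_def by (simp add: open_Diff)
  have tY: "t *\<^sub>R w \<in> Y" if "t > 0" "w \<in> Y" for t w using that by (simp add: Y_def)
  show "(\<Sum>k\<in>UNIV. y$k * G1 k y) = G y"
    using euler_gen[OF h0[OF y], of "\<lambda>t. t" 1] hom by (auto intro!: derivative_eq_intros)
  have hom1: "G1 i (t *\<^sub>R w) = G1 i w" if "t > 0" "w \<in> Y" for t w i
  proof -
    have "t * G1 i (t *\<^sub>R w) = t * G1 i w"
      by (rule hom_deriv[OF Yo that(2) that(1) h0[OF that(2)] h0[OF tY[OF that]]]) (simp add: hom that)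
    then show ?thesis using that by simp
  qed
  show "(\<Sum>k\<in>UNIV. y$k * G2 i k y) = 0"
    using euler_gen[OF h1[OF y], of i "\<lambda>t. 1" 0] hom1 y by auto
  have hom2: "G2 i j (t *\<^sub>R w) = inverse t * G2 i j w" if "t > 0" "w \<in> Y" for t w i j
  proof -
    have "t * G2 i j (t *\<^sub>R w) = 1 * G2 i j w"
      by (rule hom_deriv[OF Yo that(2) that(1) h1[OF that(2)] h1[OF tY[OF that]]]) (simp add: hom1 that)
    then show ?thesis using that by (simp add: field_simps)
  qed
  have di: "((\<lambda>t. inverse t) has_real_derivative -1) (at (1::real))"
    using DERIV_inverse[of "1::real" UNIV] by simp
  show "(\<Sum>k\<in>UNIV. y$k * G3 i j k y) = - G2 i j y"
    using euler_gen[OF h2[OF y], of i j "\<lambda>t. inverse t" "-1"] hom2 y di by auto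
qed


lemma zeta_conv:
  assumes "\<And>a b. ginv F a b y = GI a b" "\<And>a b c. cf F a b c y = CC a b c" "\<And>a b. hf F a b y = HH a b"
  shows "zeta F h i j k y = zetaA (F y) GI CC HH h i j k"
  by (simp add: zeta_def zetaA_def Sf_def SfA_def cmix_def cmixA_def Sscal_def SscalA_def Sric_def SricA_def assms)

lemma Hf_conv:
  assumes "\<And>a b. ginv F a b y = GI a b" "\<And>a b c. cf F a b c y = CC a b c" "\<And>a b. hf F a b y = HH a b"
    "\<And>a. mcov F bx a y = MM a" "Ls y = LS"
  shows "Hf F Ls bx i j y = HfA GI CC HH MM LS i j"
  by (simp add: Hf_def HfA_def cmix_def cmixA_def msq_def msqA_def assms)

lemma Abeta_conv:
  assumes "\<And>a b. ginv F a b y = GI a b" "\<And>a b c. cf F a b c y = CC a b c"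
    "\<And>a. mcov F bx a y = MM a" "Ls y = LS"
  shows "Abeta F Ls bx y = AbetaA GI CC (\<lambda>j. bx $ j) MM LS"
  by (simp add: Abeta_def AbetaA_def cbeta_def cvec_def cvecA_def msq_def msqA_def assms)

lemma inv_facts:
  fixes A :: "real^'n^'n"
  assumes pd: "\<forall>v. v \<noteq> 0 \<longrightarrow> v \<bullet> (A *v v) > 0"
  shows "(\<Sum>k\<in>UNIV. matrix_inv A $ i $ k * A $ k $ j) = (if i = j then 1 else 0)"
    and "(\<Sum>k\<in>UNIV. A $ i $ k * matrix_inv A $ k $ j) = (if i = j then 1 else 0)"
proof -
  have "\<forall>x. A *v x = 0 \<longrightarrow> x = 0"
  proof (intro allI impI)
    fix x assume "A *v x = 0"
    then show "x = 0" using pd by (metis inner_zero_right less_irrefl)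
  qed
  then have "\<exists>B. B ** A = mat 1" using matrix_left_invertible_ker by blast
  then have "invertible A" using invertible_left_inverse by blast
  then have "\<exists>A'. A ** A' = mat 1 \<and> A' ** A = mat 1" by (simp add: invertible_def)
  then have both: "A ** matrix_inv A = mat 1 \<and> matrix_inv A ** A = mat 1"
    unfolding matrix_inv_def by (rule someI_ex)
  show "(\<Sum>k\<in>UNIV. matrix_inv A $ i $ k * A $ k $ j) = (if i = j then 1 else 0)"
    using arg_cong[OF conjunct2[OF both], of "\<lambda>M. M $ i $ j"] by (simp add: matrix_matrix_mult_def mat_def)
  show "(\<Sum>k\<in>UNIV. A $ i $ k * matrix_inv A $ k $ j) = (if i = j then 1 else 0)"
    using arg_cong[OF conjunct1[OF both], of "\<lambda>M. M $ i $ j"] by (simp add: matrix_matrix_mult_def mat_def)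
qed


lemma pointwise:
  fixes U :: "(real^'n) set" and L :: "real^'n \<Rightarrow> real^'n \<Rightarrow> real"
    and \<sigma> :: "real^'n \<Rightarrow> real" and b :: "real^'n \<Rightarrow> real^'n"
  assumes n: "CARD('n) > 3" and U: "open U" and fL: "finsler U L"
    and fLs: "finsler U (Lstar \<sigma> b L)" and x: "x \<in> U" and y: "y \<noteq> 0"
  shows "(\<forall>h i j k. zeta (Lstar \<sigma> b L x) h i j k y = exp (\<sigma> x) * zeta (L x) h i j k y)
     \<longleftrightarrow> (\<forall>i j. Hf (L x) (Lstar \<sigma> b L x) (b x) i j y
              = 1 / (real CARD('n) - 1) * Abeta (L x) (Lstar \<sigma> b L x) (b x) y * hf (L x) i j y)"
proof -
  define f where "f = (\<lambda>(x, y). L x y)"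
  define Y where "Y = UNIV - {0::real^'n}"
  have Yo: "open Y" unfolding Y_def by (simp add: open_Diff)
  have yY: "y \<in> Y" using y by (simp add: Y_def)
  have So: "open (U \<times> Y)" using U Yo by (rule open_Times)
  have xw: "(x, w) \<in> U \<times> Y" if "w \<in> Y" for w using x that by simp
  have Ck: "Ck_on (Suc (Suc (Suc (Suc 0)))) (U \<times> Y) f"
    using fL unfolding finsler_def smooth_on_def f_def Y_def by blast
  have Ck3: "Ck_on (Suc (Suc (Suc 0))) (U \<times> Y) (PD f i)" for i
    unfolding PD_def by (rule Ck_D[OF Ck])
  have Ck2: "Ck_on (Suc (Suc 0)) (U \<times> Y) (PD (PD f i) j)" for i j
    unfolding PD_def[of "PD f i"] by (rule Ck_D[OF Ck3])
  have Ck1: "Ck_on (Suc 0) (U \<times> Y) (PD (PD (PD f i) j) k)" for i j k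
    unfolding PD_def[of "PD (PD f i) j"] by (rule Ck_D[OF Ck2])
  define G1 where "G1 = (\<lambda>i w. PD f i (x, w))"
  define G2 where "G2 = (\<lambda>i j w. PD (PD f i) j (x, w))"
  define G3 where "G3 = (\<lambda>i j k w. PD (PD (PD f i) j) k (x, w))"
  have Lx: "L x = (\<lambda>w. f (x, w))" by (rule ext) (simp add: f_def)
  have h0: "HD (L x) G1 w" if "w \<in> Y" for w
    unfolding Lx G1_def by (rule HD_restrict) (rule Ck_diff[OF Ck So xw[OF that]])
  have h1: "HD (G1 i) (G2 i) w" if "w \<in> Y" for w i
    unfolding G1_def G2_def by (rule HD_restrict) (rule Ck_diff[OF Ck3 So xw[OF that]])
  have h2: "HD (G2 i j) (G3 i j) w" if "w \<in> Y" for w i j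
    unfolding G2_def G3_def by (rule HD_restrict) (rule Ck_diff[OF Ck2 So xw[OF that]])
  have cpair: "continuous_on Y (\<lambda>w. (x, w))" by (intro continuous_intros)
  have cimg: "(\<lambda>w. (x, w)) ` Y \<subseteq> U \<times> Y" using x by auto
  have c2: "continuous_on Y (G2 i j)" for i j
    unfolding G2_def by (rule continuous_on_compose2[OF Ck_cont[OF Ck2] cpair cimg])
  have c3: "continuous_on Y (G3 i j k)" for i j k
    unfolding G3_def by (rule continuous_on_compose2[OF Ck_cont[OF Ck1] cpair cimg])
  have s2: "G2 i j w = G2 j i w" if "w \<in> Y" for i j w
    by (rule clairaut[OF Yo that h0 h1 c2 c2])
  have s3a: "G3 i j k w = G3 i k j w" if "w \<in> Y" for i j k w
    by (rule clairaut[OF Yo that h1 h2 c3 c3])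
  have s3b: "G3 i j k w = G3 j i k w" if w: "w \<in> Y" for i j k w
  proof -
    have t: "HD (G2 j i) (G3 i j) w" by (rule HD_transform[OF h2[OF w] Yo w]) (simp add: s2)
    have "(\<lambda>v. \<Sum>m\<in>UNIV. v$m * G3 i j m w) (axis k 1) = G3 j i k w"
      by (rule HD_unique[OF h2[OF w]]) (use t in \<open>simp add: HD_def\<close>)
    then show ?thesis by (simp add: sum_axis)
  qed
  have hom: "L x (t *\<^sub>R w) = t * L x w" if "t > 0" for t w
    using fL x that unfolding finsler_def by blast
  have E1: "(\<Sum>k\<in>UNIV. y$k * G1 k y) = L x y"
    and E2: "(\<Sum>k\<in>UNIV. y$k * G2 i k y) = 0"
    and E3: "(\<Sum>k\<in>UNIV. y$k * G3 i j k y) = - G2 i j y" for i j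
    using euler_all[of "L x" G1 G2 G3 y, OF _ _ _ hom] h0 h1 h2 yY unfolding Y_def by auto
  define e where "e = exp (\<sigma> x)"
  define bb where "bb = b x"
  have epos: "e > 0" by (simp add: e_def)
  have Lsf: "Lstar \<sigma> b L x = (\<lambda>u. e * L x u + bb \<bullet> u)" by (rule ext) (simp add: Lstar_def e_def bb_def)
  have hs0: "HD (Lstar \<sigma> b L x) (\<lambda>i u. e * G1 i u + bb $ i) w" if "w \<in> Y" for w
    unfolding Lsf by (rule star_jets(1)[OF h0 h1 h2]) (use that in auto)
  have hs1: "HD (\<lambda>u. e * G1 i u + bb $ i) (\<lambda>j u. e * G2 i j u) w" if "w \<in> Y" for w i
    by (rule star_jets(2)[OF h0 h1 h2]) (use that in auto)
  have hs2: "HD (\<lambda>u. e * G2 i j u) (\<lambda>k u. e * G3 i j k u) w" if "w \<in> Y" for w i j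
    by (rule star_jets(3)[OF h0 h1 h2]) (use that in auto)
  note JF = jets_formulas[OF Yo yY h0 h1 h2]
  note JS = jets_formulas[OF Yo yY hs0 hs1 hs2]
  have bby: "bb \<bullet> y = dotv (\<lambda>i. bb $ i) (\<lambda>i. y $ i)" by (simp add: inner_vec_def dotv_def)
  have Lsy: "Lstar \<sigma> b L x y = e * L x y + dotv (\<lambda>i. bb $ i) (\<lambda>i. y $ i)" by (simp add: Lsf bby)
  have L0pos: "L x y > 0" using fL x y unfolding finsler_def by blast
  have Lspos: "Lstar \<sigma> b L x y > 0" using fLs x y unfolding finsler_def by blast
  have pdL: "\<forall>v. v \<noteq> 0 \<longrightarrow> v \<bullet> (gmat (L x) y *v v) > 0" using fL x y unfolding finsler_def by blast
  have pdS: "\<forall>v. v \<noteq> 0 \<longrightarrow> v \<bullet> (gmat (Lstar \<sigma> b L x) y *v v) > 0" using fLs x y unfolding finsler_def by blast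
  have gfL: "gf (L x) a c y = G1 a y * G1 c y + L x y * G2 a c y" for a c
    using JF(2)[of a c] s2[OF yY, of c a] by simp
  have gfS: "gf (Lstar \<sigma> b L x) a c y = (e * G1 a y + bb $ a) * (e * G1 c y + bb $ c) + Lstar \<sigma> b L x y * (e * G2 a c y)"
    for a c using JS(2)[of a c] s2[OF yY, of c a] by simp
  interpret A: alg "\<lambda>i. y $ i" "L x y" "\<lambda>i. G1 i y" "\<lambda>i j. G2 i j y" "\<lambda>i j k. G3 i j k y"
      "\<lambda>i j. ginv (L x) i j y" e "\<lambda>i. bb $ i" "\<lambda>i j. ginv (Lstar \<sigma> b L x) i j y"
  proof (unfold_locales)
    show "3 < CARD('n)" by (rule n)
    show "0 < L x y" by (rule L0pos)
    show "0 < e" by (rule epos)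
    show "0 < e * L x y + dotv (\<lambda>i. bb $ i) (\<lambda>i. y $ i)" using Lspos Lsy by simp
    show "G2 i j y = G2 j i y" for i j by (rule s2[OF yY])
    show "G3 i j k y = G3 j i k y" for i j k by (rule s3b[OF yY])
    show "G3 i j k y = G3 i k j y" for i j k by (rule s3a[OF yY])
    show "dotv (\<lambda>i. G1 i y) (\<lambda>i. y $ i) = L x y" using E1 by (simp add: dotv_def mult.commute)
    show "dotv (\<lambda>j. G2 i j y) (\<lambda>i. y $ i) = 0" for i using E2[of i] by (simp add: dotv_def mult.commute)
    show "dotv (\<lambda>k. G3 i j k y) (\<lambda>i. y $ i) = - G2 i j y" for i j using E3[of i j] by (simp add: dotv_def mult.commute)
    show "(\<Sum>k\<in>UNIV. ginv (L x) i k y * (G1 k y * G1 j y + L x y * G2 k j y)) = (if i = j then 1 else 0)" for i j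
      using inv_facts(1)[OF pdL, of i j] by (simp add: ginv_def gmat_def gfL)
    show "(\<Sum>k\<in>UNIV. (G1 i y * G1 k y + L x y * G2 i k y) * ginv (L x) k j y) = (if i = j then 1 else 0)" for i j
      using inv_facts(2)[OF pdL, of i j] by (simp add: ginv_def gmat_def gfL)
    show "(\<Sum>k\<in>UNIV. ginv (Lstar \<sigma> b L x) i k y * ((e * G1 k y + bb $ k) * (e * G1 j y + bb $ j)
        + (e * L x y + dotv (\<lambda>i. bb $ i) (\<lambda>i. y $ i)) * (e * G2 k j y))) = (if i = j then 1 else 0)" for i j
      using inv_facts(1)[OF pdS, of i j] by (simp add: ginv_def gmat_def gfS Lsy)
  qed
  have cfL: "cf (L x) a c d y = A.c a c d" for a c d
    using JF(3)[of a c d] s2[OF yY, of c a] s3b[OF yY, of c a d] by (simp add: A.c_def algebra_simps)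
  have hfL: "hf (L x) a c y = A.hh a c" for a c
    using JF(1) gfL by (simp add: hf_def A.hh_def)
  have LsA: "Lstar \<sigma> b L x y = A.Ls" by (simp add: Lsy A.Ls_def A.beta_def)
  have cfS: "cf (Lstar \<sigma> b L x) a c d y = A.cs a c d" for a c d
    using JS(3)[of a c d] s2[OF yY, of c a] s3b[OF yY, of c a d] LsA
    by (simp add: A.cs_def A.ls_def algebra_simps)
  have hfS: "hf (Lstar \<sigma> b L x) a c y = A.hs a c" for a c
    using JS(1) gfS LsA by (simp add: hf_def A.hs_def algebra_simps)
  have mc: "mcov (L x) bb a y = A.m a" for a
    using JF(1) by (simp add: mcov_def A.m_def A.beta_def bby)
  have Z1: "zeta (Lstar \<sigma> b L x) h i j k y = zetaA A.Ls (\<lambda>i j. ginv (Lstar \<sigma> b L x) i j y) A.cs A.hs h i j k" for h i j k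
    using zeta_conv[of "Lstar \<sigma> b L x" y "\<lambda>i j. ginv (Lstar \<sigma> b L x) i j y" A.cs A.hs] cfS hfS LsA by simp
  have Z2: "zeta (L x) h i j k y = zetaA (L x y) (\<lambda>i j. ginv (L x) i j y) A.c A.hh h i j k" for h i j k
    using zeta_conv[of "L x" y "\<lambda>i j. ginv (L x) i j y" A.c A.hh] cfL hfL by simp
  have H1: "Hf (L x) (Lstar \<sigma> b L x) (b x) i j y = A.H i j" for i j
    using Hf_conv[of "L x" y "\<lambda>i j. ginv (L x) i j y" A.c A.hh bb A.m "Lstar \<sigma> b L x" A.Ls] cfL hfL mc LsA A.HfA_H
    by (simp add: bb_def)
  have A1: "Abeta (L x) (Lstar \<sigma> b L x) (b x) y = A.trA A.H"
    using Abeta_conv[of "L x" y "\<lambda>i j. ginv (L x) i j y" A.c bb A.m "Lstar \<sigma> b L x" A.Ls] cfL mc LsA A.Abeta_tr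
    by (simp add: bb_def)
  show ?thesis using A.equiv_alg unfolding Z1 Z2 H1 A1 hfL e_def by simp
qed


theorem proposition3:
  fixes U :: "(real^'n) set"
    and L :: "real^'n \<Rightarrow> real^'n \<Rightarrow> real"
    and \<sigma> :: "real^'n \<Rightarrow> real"
    and b :: "real^'n \<Rightarrow> real^'n"
  assumes n: "CARD('n) > 3"
    and U: "open U"
    and fL: "finsler U L"
    and s\<sigma>: "smooth_on U \<sigma>"
    and sb: "\<And>i. smooth_on U (\<lambda>x. b x $ i)"
    and fLs: "finsler U (Lstar \<sigma> b L)"
  shows "(\<forall>x\<in>U. \<forall>y. y \<noteq> 0 \<longrightarrow> (\<forall>h i j k.
            zeta (Lstar \<sigma> b L x) h i j k y = exp (\<sigma> x) * zeta (L x) h i j k y))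
     \<longleftrightarrow>
         (\<forall>x\<in>U. \<forall>y. y \<noteq> 0 \<longrightarrow> (\<forall>i j.
            Hf (L x) (Lstar \<sigma> b L x) (b x) i j y
              = 1 / (real CARD('n) - 1) * Abeta (L x) (Lstar \<sigma> b L x) (b x) y * hf (L x) i j y))"
proof -
  have pw: "\<And>x y. x \<in> U \<Longrightarrow> y \<noteq> 0 \<Longrightarrow>
      (\<forall>h i j k. zeta (Lstar \<sigma> b L x) h i j k y = exp (\<sigma> x) * zeta (L x) h i j k y)
      \<longleftrightarrow> (\<forall>i j. Hf (L x) (Lstar \<sigma> b L x) (b x) i j y
              = 1 / (real CARD('n) - 1) * Abeta (L x) (Lstar \<sigma> b L x) (b x) y * hf (L x) i j y)"
    by (rule pointwise[OF n U fL fLs])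
  show ?thesis using pw by blast
qed

end
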